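(* There exist constants $E,A'>0$ independent of $h$ and $T$, and $h_0,T_0>0$, such that for all $0<h<h_0$ and $T>T_0$, writing $N=[T/h]$, $e_i=v_i^{\{h,T\}}-v_i^{\{h,\infty\}}$ and $e_i=e_i^++e_i^-+e_i^0$ with $e_i^\pm\in V^\pm(u_i)$, $e_i^0\in V^0(u_i)$, one has $$\max_{1\le i\le N}\|e_i^+\|\le E\sqrt T,\qquad \max_{1\le i\le N}\|e_i^-\|\le E\sqrt T,$$ and consequently $$\Big|\frac hT\sum_{i=1}^{N}DJ(u_i,0)\big(e_i^++e_i^-\big)\Big|\le\frac{A'}{\sqrt T}.$$
   Context: Setting: ODE $\frac{du}{dt}=f(u,s)$ on $\mathbb{R}^m$ with flow $\varphi_s(u,t)$, $(s,u,t)\mapsto\varphi_s(u,t)$ of class $C^2$, $\varphi_s(u,0)=u$, $\partial_h\varphi_s(u,h)=f(\varphi_s(u,h),s)$; compact uniformly hyperbolic attractor $\Lambda$ at $s=0$ with constants $C>0$, $\lambda\in(0,1)$ and continuous splitting $\mathbb{R}^m=V^+(u)\oplus V^-(u)\oplus V^0(u)$, invariant under $D\varphi_0(u,h)$, where $V^+(u)=\{v:\|D\varphi_0(u,t)v\|\le C\lambda^{-t}\|v\|\ \forall t<0\}$, $V^-(u)=\{v:\|D\varphi_0(u,t)v\|\le C\lambda^{t}\|v\|\ \forall t>0\}$, $V^0(u)=\mathrm{span}f(u,0)$; also $\partial_h\partial_s\varphi_0$ continuous, so that the shadowing direction is bounded independently of $h$. $J$ is $C^1$ with $u$-derivative $DJ$.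 Fix $\alpha>0$, $h>0$, $T>0$, $\{u_i\}_{i\in\mathbb{Z}}\subset\Lambda$ with $u_{i+1}=\varphi_0(u_i,h)$. $(v_i^{\{h,T\}},\eta_i^{\{h,T\}})_{i=1}^{N}$ solves $\min\sum_{i=1}^N(\|v_i\|^2+\alpha\eta_i^2)$ subject to $v_{i+1}=D\varphi_0(u_i,h)v_i+\partial_s\varphi_0(u_i,h)+h\eta_i\partial_h\varphi_0(u_i,h)$. $(v_i^{\{h,\infty\}},\eta_i^{\{h,\infty\}})$ is the shadowing direction, i.e. $\big(\frac{du_i^s}{ds},\frac{d\tau_i^s}{ds}\big)|_{s=0}$ where $(u_i^s,\tau_i^s)$ is the shadowing trajectory: the sequence, close to $(u_i,1)$ uniformly in $i$, with $u_i^s=\varphi_s(u_{i-1}^s,h\tau_{i-1}^s)$, depending $i$-uniformly $C^1$ on $s$. *)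

theory Defs
  imports "HOL-Analysis.Analysis"
begin

definition C1_map :: "('a::real_normed_vector \<Rightarrow> 'b::real_normed_vector) \<Rightarrow> bool" where
  "C1_map g \<longleftrightarrow> (\<exists>g'. (\<forall>x. (g has_derivative blinfun_apply (g' x)) (at x)) \<and> continuous_on UNIV g')"

definition C2_map :: "('a::real_normed_vector \<Rightarrow> 'b::real_normed_vector) \<Rightarrow> bool" where
  "C2_map g \<longleftrightarrow> (\<exists>g'. (\<forall>x. (g has_derivative blinfun_apply (g' x)) (at x)) \<and> C1_map g')"

definition V0 :: "('a::real_normed_vector \<Rightarrow> real \<Rightarrow> 'a) \<Rightarrow> 'a \<Rightarrow> 'a set" where
  "V0 f u = span {f u 0}"

text \<open>Dphi u t is the u-derivative of phi_0 at (u,t).\<close>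

definition hyperbolic_splitting ::
  "('a::euclidean_space \<Rightarrow> real \<Rightarrow> 'a) \<Rightarrow> (real \<Rightarrow> 'a \<Rightarrow> real \<Rightarrow> 'a) \<Rightarrow> ('a \<Rightarrow> real \<Rightarrow> 'a \<Rightarrow>\<^sub>L 'a)
    \<Rightarrow> 'a set \<Rightarrow> real \<Rightarrow> real \<Rightarrow> ('a \<Rightarrow> 'a set) \<Rightarrow> ('a \<Rightarrow> 'a set) \<Rightarrow> bool" where
  "hyperbolic_splitting f phi Dphi Lambda C lam Vp Vm \<longleftrightarrow>
     (\<forall>u\<in>Lambda. subspace (Vp u) \<and> subspace (Vm u)) \<and>
     (\<forall>u\<in>Lambda. \<forall>a\<in>Vp u. \<forall>b\<in>Vm u. \<forall>c\<in>V0 f u. a + b + c = 0 \<longrightarrow> a = 0 \<and> b = 0 \<and> c = 0) \<and>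
     (\<exists>Pp Pm Pz :: 'a \<Rightarrow> 'a \<Rightarrow>\<^sub>L 'a.
        continuous_on Lambda Pp \<and> continuous_on Lambda Pm \<and> continuous_on Lambda Pz \<and>
        (\<forall>u\<in>Lambda. \<forall>v. Pp u v \<in> Vp u \<and> Pm u v \<in> Vm u \<and> Pz u v \<in> V0 f u
                         \<and> v = Pp u v + Pm u v + Pz u v)) \<and>
     (\<forall>u\<in>Lambda. \<forall>t. Dphi u t ` Vp u = Vp (phi 0 u t) \<and> Dphi u t ` Vm u = Vm (phi 0 u t)) \<and>
     (\<forall>u\<in>Lambda. \<forall>v\<in>Vp u. \<forall>t<0. norm (Dphi u t v) \<le> C * lam powr (- t) * norm v) \<and>
     (\<forall>u\<in>Lambda. \<forall>v\<in>Vm u. \<forall>t>0. norm (Dphi u t v) \<le> C * lam powr t * norm v)"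

text \<open>Least squares shadowing problem on indices 1..N: constraint for 1 <= i < N,
  objective sum_{i=1}^N (|v_i|^2 + alpha eta_i^2).  dsphi u h = d/ds phi_s(u,h) at s=0,
  and d/dh phi_0(u,h) = f(phi_0(u,h),0).\<close>

definition lss_feasible ::
  "(real \<Rightarrow> 'a \<Rightarrow> real \<Rightarrow> 'a) \<Rightarrow> ('a::real_normed_vector \<Rightarrow> real \<Rightarrow> 'a) \<Rightarrow> ('a \<Rightarrow> real \<Rightarrow> 'a \<Rightarrow>\<^sub>L 'a)
    \<Rightarrow> ('a \<Rightarrow> real \<Rightarrow> 'a) \<Rightarrow> real \<Rightarrow> (int \<Rightarrow> 'a) \<Rightarrow> int \<Rightarrow> (int \<Rightarrow> 'a) \<Rightarrow> (int \<Rightarrow> real) \<Rightarrow> bool" where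
  "lss_feasible phi f Dphi dsphi h u N v eta \<longleftrightarrow>
     (\<forall>i. 1 \<le> i \<and> i < N \<longrightarrow>
        v (i + 1) = Dphi (u i) h (v i) + dsphi (u i) h + (h * eta i) *\<^sub>R f (phi 0 (u i) h) 0)"

definition lss_objective :: "real \<Rightarrow> int \<Rightarrow> (int \<Rightarrow> 'a::real_normed_vector) \<Rightarrow> (int \<Rightarrow> real) \<Rightarrow> real" where
  "lss_objective alpha N v eta = (\<Sum>i\<in>{1..N}. (norm (v i))\<^sup>2 + alpha * (eta i)\<^sup>2)"

definition lss_solution ::
  "(real \<Rightarrow> 'a \<Rightarrow> real \<Rightarrow> 'a) \<Rightarrow> ('a::real_normed_vector \<Rightarrow> real \<Rightarrow> 'a) \<Rightarrow> ('a \<Rightarrow> real \<Rightarrow> 'a \<Rightarrow>\<^sub>L 'a)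
    \<Rightarrow> ('a \<Rightarrow> real \<Rightarrow> 'a) \<Rightarrow> real \<Rightarrow> real \<Rightarrow> (int \<Rightarrow> 'a) \<Rightarrow> int \<Rightarrow> (int \<Rightarrow> 'a) \<Rightarrow> (int \<Rightarrow> real) \<Rightarrow> bool" where
  "lss_solution phi f Dphi dsphi alpha h u N v eta \<longleftrightarrow>
     lss_feasible phi f Dphi dsphi h u N v eta \<and>
     (\<forall>v' eta'. lss_feasible phi f Dphi dsphi h u N v' eta' \<longrightarrow>
        lss_objective alpha N v eta \<le> lss_objective alpha N v' eta')"

text \<open>Shadowing direction: (vinf, etainf) = d/ds (u_i^s, tau_i^s) at s = 0, where
  (u^s, tau^s) is a shadowing trajectory: equal to (u_i, 1) at s = 0,
  u_i^s = phi_s(u_{i-1}^s, h tau_{i-1}^s) for |s| < eps, and C^1 in s uniformly in i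
  (derivatives bounded and equicontinuous in s, uniformly in i); in particular it stays
  uniformly close to (u_i,1) for small s.\<close>

definition shadowing_direction ::
  "(real \<Rightarrow> 'a::real_normed_vector \<Rightarrow> real \<Rightarrow> 'a) \<Rightarrow> real \<Rightarrow> (int \<Rightarrow> 'a) \<Rightarrow> (int \<Rightarrow> 'a) \<Rightarrow> (int \<Rightarrow> real) \<Rightarrow> bool" where
  "shadowing_direction phi h u vinf etainf \<longleftrightarrow>
     (\<exists>eps>0. \<exists>us taus dus dtaus.
        us 0 = u \<and> taus 0 = (\<lambda>i. 1) \<and>
        (\<forall>s i. \<bar>s\<bar> < eps \<longrightarrow> us s i = phi s (us s (i - 1)) (h * taus s (i - 1))) \<and>
        (\<forall>s i. \<bar>s\<bar> < eps \<longrightarrow> ((\<lambda>r. us r i) has_vector_derivative dus s i) (at s)) \<and>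
        (\<forall>s i. \<bar>s\<bar> < eps \<longrightarrow> ((\<lambda>r. taus r i) has_real_derivative dtaus s i) (at s)) \<and>
        (\<exists>B. \<forall>s i. \<bar>s\<bar> < eps \<longrightarrow> norm (dus s i) \<le> B \<and> \<bar>dtaus s i\<bar> \<le> B) \<and>
        (\<forall>e>0. \<exists>d>0. \<forall>s s' i. \<bar>s\<bar> < eps \<longrightarrow> \<bar>s'\<bar> < eps \<longrightarrow> \<bar>s - s'\<bar> < d \<longrightarrow>
            norm (dus s i - dus s' i) < e \<and> \<bar>dtaus s i - dtaus s' i\<bar> < e) \<and>
        vinf = dus 0 \<and> etainf = dtaus 0)"

end

theory Submission
  imports Defs
begin


locale setting =
  fixes f :: "'a::euclidean_space \<Rightarrow> real \<Rightarrow> 'a"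
    and phi :: "real \<Rightarrow> 'a \<Rightarrow> real \<Rightarrow> 'a"
    and Dphi :: "'a \<Rightarrow> real \<Rightarrow> 'a \<Rightarrow>\<^sub>L 'a"
    and dsphi :: "'a \<Rightarrow> real \<Rightarrow> 'a"
    and Lambda :: "'a set" and C lam :: real
    and Vp Vm :: "'a \<Rightarrow> 'a set"
    and J :: "'a \<Rightarrow> real \<Rightarrow> real" and DJ :: "'a \<Rightarrow> real \<Rightarrow> 'a \<Rightarrow>\<^sub>L real"
    and alpha :: real and u0 :: 'a
  assumes phi_C2: "C2_map (\<lambda>(s, u, t). phi s u t)"
    and phi_init: "\<forall>s u. phi s u 0 = u"
    and phi_ode: "\<forall>s u t. ((\<lambda>t. phi s u t) has_vector_derivative f (phi s u t) s) (at t)"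
    and Dphi_def: "\<forall>u t. ((\<lambda>x. phi 0 x t) has_derivative blinfun_apply (Dphi u t)) (at u)"
    and dsphi_def: "\<forall>u t. ((\<lambda>s. phi s u t) has_vector_derivative dsphi u t) (at 0)"
    and Lambda_compact: "compact Lambda"
    and Lambda_inv: "\<forall>u\<in>Lambda. \<forall>t. phi 0 u t \<in> Lambda"
    and C_pos: "C > 0" and lam: "0 < lam" "lam < 1"
    and hyp: "hyperbolic_splitting f phi Dphi Lambda C lam Vp Vm"
    and J_C1: "C1_map (\<lambda>(u, s). J u s)"
    and DJ_def: "\<forall>u s. ((\<lambda>x. J x s) has_derivative blinfun_apply (DJ u s)) (at u)"
    and alpha_pos: "alpha > 0"
    and u0_in: "u0 \<in> Lambda"
begin

definition G' where "G' = (SOME g'. (\<forall>x. ((\<lambda>(s, u, t). phi s u t) has_derivative blinfun_apply (g' x)) (at x)) \<and> C1_map g')"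

lemma G'_prop: "(\<forall>x. ((\<lambda>(s, u, t). phi s u t) has_derivative blinfun_apply (G' x)) (at x)) \<and> C1_map G'"
  using phi_C2 unfolding C2_map_def G'_def by (rule someI_ex)

lemma G'_deriv: "((\<lambda>(s, u, t). phi s u t) has_derivative blinfun_apply (G' x)) (at x)"
  using G'_prop by blast

lemma G'_C1: "C1_map G'" using G'_prop by blast

definition G'' where "G'' = (SOME g'. (\<forall>x. (G' has_derivative blinfun_apply (g' x)) (at x)) \<and> continuous_on UNIV g')"

lemma G''_prop: "(\<forall>x. (G' has_derivative blinfun_apply (G'' x)) (at x)) \<and> continuous_on UNIV G''"
  using G'_C1 unfolding C1_map_def G''_def by (rule someI_ex)

lemma G'_cont: "continuous_on UNIV G'"
proof -
  have "\<forall>x. isCont G' x" using G''_prop has_derivative_continuous by blast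
  then show ?thesis by (simp add: continuous_at_imp_continuous_on)
qed

lemma phi_comp_deriv:
  assumes "(p has_derivative p') (at x within S)"
  shows "((\<lambda>x. phi (fst (p x)) (fst (snd (p x))) (snd (snd (p x)))) has_derivative (\<lambda>v. G' (p x) (p' v))) (at x within S)"
proof -
  have "((\<lambda>x. (\<lambda>(s, u, t). phi s u t) (p x)) has_derivative (\<lambda>v. G' (p x) (p' v))) (at x within S)"
    by (rule has_derivative_compose[OF assms G'_deriv])
  then show ?thesis by (simp add: case_prod_beta)
qed

lemma Dphi_eq: "Dphi u t v = G' (0, u, t) (0, v, 0)"
proof -
  have "((\<lambda>x. (0::real, x, t)) has_derivative (\<lambda>v. (0, v, 0))) (at u)"
    by (auto intro!: derivative_eq_intros simp: zero_prod_def)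
  from phi_comp_deriv[OF this] have "((\<lambda>x. phi 0 x t) has_derivative (\<lambda>v. G' (0, u, t) (0, v, 0))) (at u)"
    by simp
  with Dphi_def have "blinfun_apply (Dphi u t) = (\<lambda>v. G' (0, u, t) (0, v, 0))"
    using has_derivative_unique by blast
  then show ?thesis by simp
qed

lemma dsphi_eq: "dsphi u t = G' (0, u, t) (1, 0, 0)"
proof -
  have "((\<lambda>s. (s, u, t)) has_derivative (\<lambda>v. (v, 0, 0))) (at 0)"
    by (auto intro!: derivative_eq_intros simp: zero_prod_def)
  from phi_comp_deriv[OF this] have "((\<lambda>s. phi s u t) has_derivative (\<lambda>v. G' (0, u, t) (v, 0, 0))) (at 0)"
    by simp
  moreover have "((\<lambda>s. phi s u t) has_derivative (\<lambda>v. v *\<^sub>R dsphi u t)) (at 0)"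
    using dsphi_def by (simp add: has_vector_derivative_def)
  ultimately have "(\<lambda>v. G' (0, u, t) (v, 0, 0)) = (\<lambda>v. v *\<^sub>R dsphi u t)"
    using has_derivative_unique by blast
  from fun_cong[OF this, of 1] show ?thesis by simp
qed

lemma f_eq: "f (phi s u t) s = G' (s, u, t) (0, 0, 1)"
proof -
  have "((\<lambda>t. (s, u, t)) has_derivative (\<lambda>v. (0, 0, v))) (at t)"
    by (auto intro!: derivative_eq_intros simp: zero_prod_def)
  from phi_comp_deriv[OF this] have "((\<lambda>t. phi s u t) has_derivative (\<lambda>v. G' (s, u, t) (0, 0, v))) (at t)"
    by simp
  moreover have "((\<lambda>t. phi s u t) has_derivative (\<lambda>v. v *\<^sub>R f (phi s u t) s)) (at t)"
    using phi_ode by (simp add: has_vector_derivative_def)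
  ultimately have "(\<lambda>v. G' (s, u, t) (0, 0, v)) = (\<lambda>v. v *\<^sub>R f (phi s u t) s)"
    using has_derivative_unique by blast
  from fun_cong[OF this, of 1] show ?thesis by simp
qed

definition F where "F w = f w 0"

lemma F_eq: "F w = G' (0, w, 0) (0, 0, 1)"
  using f_eq[of 0 w 0] phi_init by (simp add: F_def)

end



lemma cont_lip_blinfun:
  fixes Gd :: "'x::euclidean_space \<Rightarrow> 'x \<Rightarrow>\<^sub>L 'y::real_normed_vector"
  assumes "\<forall>x. (Gd has_derivative blinfun_apply (Gdd x)) (at x)" "continuous_on UNIV Gdd"
  shows "\<exists>L. \<forall>x\<in>cball 0 r. \<forall>y\<in>cball 0 r. norm (Gd x - Gd y) \<le> L * norm (x - y)"
proof -
  have "compact (Gdd ` cball 0 r)"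
    by (rule compact_continuous_image) (use assms(2) continuous_on_subset in auto)
  then obtain B where B: "\<forall>x\<in>cball 0 r. norm (Gdd x) \<le> B"
    by (meson bounded_iff compact_imp_bounded image_eqI)
  show ?thesis
  proof (intro exI ballI)
    fix x y assume "x \<in> cball (0::'x) r" "y \<in> cball (0::'x) r"
    show "norm (Gd x - Gd y) \<le> B * norm (x - y)"
    proof (rule differentiable_bound[where S="cball 0 r" and f'="\<lambda>x. blinfun_apply (Gdd x)"])
      show "convex (cball (0::'x) r)" by simp
      show "(Gd has_derivative blinfun_apply (Gdd x)) (at x within cball 0 r)" for x
        using assms(1) has_derivative_at_withinI by blast
      show "onorm (blinfun_apply (Gdd x)) \<le> B" if "x \<in> cball 0 r" for x
        using B that by (simp add: norm_blinfun.rep_eq[symmetric])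
    qed fact+
  qed
qed

lemma t1:
  fixes y z :: "real \<Rightarrow> 'b::real_inner"
  assumes dy: "\<forall>s. (y has_vector_derivative Gf (y s)) (at s)"
    and dz: "\<forall>s. (z has_vector_derivative Gf (z s)) (at s)"
  shows "((\<lambda>s. y s - z s) has_vector_derivative (Gf (y s) - Gf (z s))) (at s)"
  using dy dz by (intro has_vector_derivative_diff) auto
lemma t2:
  fixes d :: "real \<Rightarrow> 'b::real_inner"
  assumes dd: "(d has_vector_derivative e) (at s)"
  shows "((\<lambda>s. inner (d s) (d s)) has_real_derivative 2 * inner (d s) e) (at s)"
proof -
  have "((\<lambda>s. inner (d s) (d s)) has_derivative (\<lambda>h. inner (d s) (h *\<^sub>R e) + inner (h *\<^sub>R e) (d s))) (at s)"
    using dd unfolding has_vector_derivative_def by (intro has_derivative_inner)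
  moreover have "(\<lambda>h. inner (d s) (h *\<^sub>R e) + inner (h *\<^sub>R e) (d s)) = (\<lambda>h. (2 * inner (d s) e) * h)"
    by (auto simp: inner_commute algebra_simps)
  ultimately show ?thesis by (simp add: has_field_derivative_def)
qed
lemma t3: "((\<lambda>s. exp (- 2 * L * s)) has_real_derivative exp (- 2 * L * s) * (- 2 * L)) (at s)"
  by (auto intro!: derivative_eq_intros)

lemma ode_unique_fwd:
  fixes y z :: "real \<Rightarrow> 'b::real_inner"
  assumes t: "0 \<le> t"
    and dy: "\<forall>s. (y has_vector_derivative Gf (y s)) (at s)"
    and dz: "\<forall>s. (z has_vector_derivative Gf (z s)) (at s)"
    and init: "y 0 = z 0"
    and lip: "\<And>r. \<exists>L. \<forall>a\<in>cball 0 r. \<forall>b\<in>cball 0 r. norm (Gf a - Gf b) \<le> L * norm (a - b)"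
  shows "y t = z t"
proof -
  have cy: "continuous_on {0..t} y" using dy
    by (intro continuous_at_imp_continuous_on ballI has_vector_derivative_continuous) blast
  have cz: "continuous_on {0..t} z" using dz
    by (intro continuous_at_imp_continuous_on ballI has_vector_derivative_continuous) blast
  have "bounded (y ` {0..t} \<union> z ` {0..t})"
  proof -
    have "compact (y ` {0..t})" by (rule compact_continuous_image[OF cy]) simp
    moreover have "compact (z ` {0..t})" by (rule compact_continuous_image[OF cz]) simp
    ultimately show ?thesis by (simp add: compact_imp_bounded)
  qed
  then obtain r where "\<forall>x\<in>y ` {0..t} \<union> z ` {0..t}. norm x \<le> r"
    unfolding bounded_pos by blast
  then have r: "y ` {0..t} \<union> z ` {0..t} \<subseteq> cball 0 r" by (auto simp: mem_cball_0)
  obtain L0 where L0: "\<forall>a\<in>cball 0 r. \<forall>b\<in>cball 0 r. norm (Gf a - Gf b) \<le> L0 * norm (a - b)"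
    using lip by blast
  define L where "L = max L0 0"
  have L: "norm (Gf a - Gf b) \<le> L * norm (a - b)" if "a \<in> cball 0 r" "b \<in> cball 0 r" for a b
  proof -
    have "L0 * norm (a - b) \<le> L * norm (a - b)" unfolding L_def by (simp add: mult_right_mono)
    have "norm (Gf a - Gf b) \<le> L0 * norm (a - b)" using L0 that by blast
    then show ?thesis using \<open>L0 * norm (a - b) \<le> L * norm (a - b)\<close> by linarith
  qed
  define q where "q s = inner (y s - z s) (y s - z s)" for s
  define w where "w s = q s * exp (- 2 * L * s)" for s
  have "w t \<le> w 0"
  proof (rule DERIV_nonpos_imp_nonincreasing[OF t])
    fix s assume s: "0 \<le> s" "s \<le> t"
    have ys: "y s \<in> cball 0 r" and zs: "z s \<in> cball 0 r" 
    proof -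
      have "y s \<in> y ` {0..t}" "z s \<in> z ` {0..t}" using s by auto
      then show "y s \<in> cball 0 r" "z s \<in> cball 0 r" using r by blast+
    qed
    let ?d = "y s - z s" and ?e = "Gf (y s) - Gf (z s)"
    have dq: "(q has_real_derivative 2 * inner ?d ?e) (at s)"
      proof -
      have qe: "q = (\<lambda>s. inner (y s - z s) (y s - z s))" by (rule ext) (simp only: q_def)
      have d1: "((\<lambda>s. y s - z s) has_vector_derivative (Gf (y s) - Gf (z s))) (at s)"
        by (rule t1[OF dy dz])
      show ?thesis unfolding qe by (rule t2[OF d1])
    qed
    have "inner ?d ?e \<le> norm ?d * norm ?e" by (rule norm_cauchy_schwarz)
    also have "\<dots> \<le> norm ?d * (L * norm ?d)"
      using L[OF ys zs] by (intro mult_left_mono) auto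
    finally have le: "2 * inner ?d ?e \<le> 2 * L * q s"
      unfolding q_def power2_norm_eq_inner[symmetric] by (simp add: power2_eq_square mult.assoc mult.left_commute)
    have "(w has_real_derivative q s * (exp (- 2 * L * s) * (- 2 * L)) + (2 * inner ?d ?e) * exp (- 2 * L * s)) (at s)"
      unfolding w_def by (rule DERIV_mult'[OF dq t3])
    moreover have "q s * (exp (- 2 * L * s) * (- 2 * L)) + (2 * inner ?d ?e) * exp (- 2 * L * s) \<le> 0"
    proof -
      have "(2 * inner ?d ?e) * exp (- 2 * L * s) \<le> (2 * L * q s) * exp (- 2 * L * s)"
        using le by (simp add: mult_right_mono)
      then show ?thesis by (simp add: algebra_simps)
    qed
    ultimately show "\<exists>D. (w has_real_derivative D) (at s) \<and> D \<le> 0" by blast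
  qed
  moreover have "w 0 = 0" using init by (simp add: w_def q_def)
  moreover have "w t \<ge> 0" by (simp add: w_def q_def)
  ultimately have "w t = 0" by simp
  then have "q t = 0" by (simp add: w_def)
  then show ?thesis by (simp add: q_def)
qed
lemma ode_unique:
  fixes y z :: "real \<Rightarrow> 'b::real_inner"
  assumes dy: "\<forall>s. (y has_vector_derivative Gf (y s)) (at s)"
    and dz: "\<forall>s. (z has_vector_derivative Gf (z s)) (at s)"
    and init: "y 0 = z 0"
    and lip: "\<And>r. \<exists>L. \<forall>a\<in>cball 0 r. \<forall>b\<in>cball 0 r. norm (Gf a - Gf b) \<le> L * norm (a - b)"
  shows "y t = z t"
proof (cases "0 \<le> t")
  case True
  then show ?thesis using ode_unique_fwd[OF True dy dz init lip] by blast
next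
  case False
  have dy': "\<forall>s. ((\<lambda>s. y (- s)) has_vector_derivative (\<lambda>a. - Gf a) (y (- s))) (at s)"
  proof
    fix s
    have m: "(uminus has_vector_derivative (-1)) (at s)"
      using has_vector_derivative_minus[OF has_vector_derivative_id] by simp
    have "((\<lambda>s. y (- s)) has_vector_derivative (-1) *\<^sub>R Gf (y (- s))) (at s)"
      using vector_diff_chain_at[OF m, of y] dy by (simp add: o_def)
    then show "((\<lambda>s. y (- s)) has_vector_derivative (\<lambda>a. - Gf a) (y (- s))) (at s)" by simp
  qed
  have dz': "\<forall>s. ((\<lambda>s. z (- s)) has_vector_derivative (\<lambda>a. - Gf a) (z (- s))) (at s)"
  proof
    fix s
    have m: "(uminus has_vector_derivative (-1)) (at s)"
      using has_vector_derivative_minus[OF has_vector_derivative_id] by simp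
    have "((\<lambda>s. z (- s)) has_vector_derivative (-1) *\<^sub>R Gf (z (- s))) (at s)"
      using vector_diff_chain_at[OF m, of z] dz by (simp add: o_def)
    then show "((\<lambda>s. z (- s)) has_vector_derivative (\<lambda>a. - Gf a) (z (- s))) (at s)" by simp
  qed
  have lip': "\<exists>L. \<forall>a\<in>cball 0 r. \<forall>b\<in>cball 0 r. norm (- Gf a - - Gf b) \<le> L * norm (a - b)" for r
    using lip[of r] by (metis minus_diff_eq minus_diff_minus norm_minus_commute)
  have "0 \<le> - t" using False by simp
  from ode_unique_fwd[OF this dy' dz' _ lip'] init show ?thesis by simp
qed

context setting begin

lemma G'_lip: "\<exists>L. \<forall>x\<in>cball 0 r. \<forall>y\<in>cball 0 r. norm (G' x - G' y) \<le> L * norm (x - y)"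
  using cont_lip_blinfun G''_prop by blast

lemma F_lip: "\<exists>L. \<forall>a\<in>cball 0 r. \<forall>b\<in>cball 0 r. norm (F a - F b) \<le> L * norm (a - b)"
proof -
  obtain L where L: "\<forall>x\<in>cball 0 r. \<forall>y\<in>cball 0 r. norm (G' x - G' y) \<le> L * norm (x - y)"
    using G'_lip by blast
  show ?thesis
  proof (intro exI ballI)
    fix a b assume a: "a \<in> cball (0::'a) r" and b: "b \<in> cball (0::'a) r"
    have ca: "(0::real, a, 0::real) \<in> cball 0 r" using a by (simp add: norm_Pair)
    have cb: "(0::real, b, 0::real) \<in> cball 0 r" using b by (simp add: norm_Pair)
    have "norm (F a - F b) = norm (blinfun_apply (G' (0, a, 0) - G' (0, b, 0)) (0, 0, 1))"
      by (simp add: F_eq blinfun.diff_left)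
    also have "\<dots> \<le> norm (G' (0, a, 0) - G' (0, b, 0)) * norm ((0::real, 0::'a, 1::real))"
      by (rule norm_blinfun)
    also have "\<dots> = norm (G' (0, a, 0) - G' (0, b, 0))" by (simp add: norm_Pair)
    also have "\<dots> \<le> L * norm ((0::real, a, 0::real) - (0, b, 0))" using L ca cb by blast
    also have "\<dots> = L * norm (a - b)" by (simp add: norm_Pair)
    finally show "norm (F a - F b) \<le> L * norm (a - b)" .
  qed
qed

lemma phi0_ode: "((\<lambda>t. phi 0 u t) has_vector_derivative F (phi 0 u t)) (at t)"
  using phi_ode by (simp add: F_def)

lemma group: "phi 0 (phi 0 u a) b = phi 0 u (a + b)"
proof -
  have dy: "\<forall>s. ((\<lambda>b. phi 0 (phi 0 u a) b) has_vector_derivative F (phi 0 (phi 0 u a) s)) (at s)"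
    using phi0_ode by blast
  have dz: "\<forall>s. ((\<lambda>b. phi 0 u (a + b)) has_vector_derivative F (phi 0 u (a + s))) (at s)"
  proof
    fix s
    have m: "((\<lambda>b. a + b) has_vector_derivative 1) (at s)"
      using has_vector_derivative_add[OF has_vector_derivative_const has_vector_derivative_id, of a] by simp
    have "((\<lambda>b. phi 0 u (a + b)) has_vector_derivative 1 *\<^sub>R F (phi 0 u (a + s))) (at s)"
      using vector_diff_chain_at[OF m, of "phi 0 u"] phi0_ode by (simp add: o_def)
    then show "((\<lambda>b. phi 0 u (a + b)) has_vector_derivative F (phi 0 u (a + s))) (at s)" by simp
  qed
  show ?thesis
    using ode_unique[where y="\<lambda>b. phi 0 (phi 0 u a) b" and z="\<lambda>b. phi 0 u (a + b)", OF dy dz _ F_lip]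
    phi_init by simp
qed

end



context setting begin

lemma Dphi_chain: "Dphi u (a + b) v = Dphi (phi 0 u a) b (Dphi u a v)"
proof -
  have d1: "((\<lambda>x. phi 0 x a) has_derivative blinfun_apply (Dphi u a)) (at u)" using Dphi_def by blast
  have d2: "((\<lambda>x. phi 0 x b) has_derivative blinfun_apply (Dphi (phi 0 u a) b)) (at (phi 0 u a))" using Dphi_def by blast
  have "((\<lambda>x. phi 0 (phi 0 x a) b) has_derivative (\<lambda>v. Dphi (phi 0 u a) b (Dphi u a v))) (at u)"
    by (rule has_derivative_compose[OF d1 d2])
  moreover have "(\<lambda>x. phi 0 (phi 0 x a) b) = (\<lambda>x. phi 0 x (a + b))" by (rule ext) (rule group)
  ultimately have "((\<lambda>x. phi 0 x (a + b)) has_derivative (\<lambda>v. Dphi (phi 0 u a) b (Dphi u a v))) (at u)" by simp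
  moreover have "((\<lambda>x. phi 0 x (a + b)) has_derivative blinfun_apply (Dphi u (a + b))) (at u)" using Dphi_def by blast
  ultimately have "blinfun_apply (Dphi u (a + b)) = (\<lambda>v. Dphi (phi 0 u a) b (Dphi u a v))"
    using has_derivative_unique by blast
  then show ?thesis by simp
qed

lemma Dphi_zero: "Dphi u 0 v = v"
proof -
  have "(\<lambda>x. phi 0 x 0) = (\<lambda>x. x)" using phi_init by auto
  then have "((\<lambda>x. phi 0 x 0) has_derivative (\<lambda>v. v)) (at u)" by (simp add: has_derivative_ident)
  moreover have "((\<lambda>x. phi 0 x 0) has_derivative blinfun_apply (Dphi u 0)) (at u)" using Dphi_def by blast
  ultimately have "blinfun_apply (Dphi u 0) = (\<lambda>v. v)" using has_derivative_unique by blast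
  then show ?thesis by simp
qed

lemma Dphi_inv: "Dphi (phi 0 u t) (- t) (Dphi u t v) = v"
  using Dphi_chain[of u t "- t" v] Dphi_zero by simp

lemma Dphi_F: "Dphi u t (F u) = F (phi 0 u t)"
proof -
  have d1: "((\<lambda>s. phi 0 u s) has_derivative (\<lambda>h. h *\<^sub>R F u)) (at 0)"
    using phi0_ode[of u 0] phi_init by (simp add: has_vector_derivative_def)
  have d2: "((\<lambda>x. phi 0 x t) has_derivative blinfun_apply (Dphi u t)) (at (phi 0 u 0))"
    using Dphi_def phi_init by simp
  have "((\<lambda>s. phi 0 (phi 0 u s) t) has_derivative (\<lambda>h. Dphi u t (h *\<^sub>R F u))) (at 0)"
    by (rule has_derivative_compose[OF d1 d2])
  then have "((\<lambda>s. phi 0 (phi 0 u s) t) has_vector_derivative Dphi u t (F u)) (at 0)"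
    by (simp add: has_vector_derivative_def blinfun.scaleR_right)
  moreover have "(\<lambda>s. phi 0 (phi 0 u s) t) = (\<lambda>s. phi 0 u (s + t))" by (rule ext) (rule group)
  ultimately have A: "((\<lambda>s. phi 0 u (s + t)) has_vector_derivative Dphi u t (F u)) (at 0)" by simp
  have m: "((\<lambda>s. s + t) has_vector_derivative 1) (at 0)"
    by (auto intro!: derivative_eq_intros)
  have "((\<lambda>s. phi 0 u (s + t)) has_vector_derivative 1 *\<^sub>R F (phi 0 u (0 + t))) (at 0)"
    using vector_diff_chain_at[OF m, of "phi 0 u"] phi0_ode by (simp add: o_def)
  then have B: "((\<lambda>s. phi 0 u (s + t)) has_vector_derivative F (phi 0 u t)) (at 0)" by simp
  show ?thesis using vector_derivative_unique_at[OF A B] .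
qed

lemma V0_eq: "V0 f u = range (\<lambda>k. k *\<^sub>R F u)"
  unfolding V0_def F_def by (simp add: span_singleton)

lemma V0_inv: "c \<in> V0 f u \<Longrightarrow> Dphi u t c \<in> V0 f (phi 0 u t)"
  unfolding V0_eq using Dphi_F by (auto simp: blinfun.scaleR_right)

lemma F_in_V0: "k *\<^sub>R F u \<in> V0 f u"
  unfolding V0_eq by auto

lemma hyp_sub: "u \<in> Lambda \<Longrightarrow> subspace (Vp u) \<and> subspace (Vm u)"
  using hyp unfolding hyperbolic_splitting_def by blast

lemma V0_sub: "subspace (V0 f u)" unfolding V0_def by (rule subspace_span)

lemma hyp_dir: "u \<in> Lambda \<Longrightarrow> a \<in> Vp u \<Longrightarrow> b \<in> Vm u \<Longrightarrow> c \<in> V0 f u \<Longrightarrow> a + b + c = 0 \<Longrightarrow> a = 0 \<and> b = 0 \<and> c = 0"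
  using hyp unfolding hyperbolic_splitting_def by blast

lemma decomp_unique:
  assumes "u \<in> Lambda" "a \<in> Vp u" "b \<in> Vm u" "c \<in> V0 f u" "a' \<in> Vp u" "b' \<in> Vm u" "c' \<in> V0 f u"
    and "a + b + c = a' + b' + c'"
  shows "a = a' \<and> b = b' \<and> c = c'"
proof -
  have "a - a' \<in> Vp u" "b - b' \<in> Vm u" "c - c' \<in> V0 f u"
    using hyp_sub[OF assms(1)] V0_sub assms by (auto intro: subspace_diff)
  moreover have "(a - a') + (b - b') + (c - c') = 0" using assms(8) by (simp add: algebra_simps)
  ultimately show ?thesis using hyp_dir[OF assms(1)] by fastforce
qed

lemma Vp_inv: "u \<in> Lambda \<Longrightarrow> a \<in> Vp u \<Longrightarrow> Dphi u t a \<in> Vp (phi 0 u t)"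
  using hyp unfolding hyperbolic_splitting_def by blast

lemma Vm_inv: "u \<in> Lambda \<Longrightarrow> a \<in> Vm u \<Longrightarrow> Dphi u t a \<in> Vm (phi 0 u t)"
  using hyp unfolding hyperbolic_splitting_def by blast

lemma Vp_est: "u \<in> Lambda \<Longrightarrow> v \<in> Vp u \<Longrightarrow> t < 0 \<Longrightarrow> norm (Dphi u t v) \<le> C * lam powr (- t) * norm v"
  using hyp unfolding hyperbolic_splitting_def by blast

lemma Vm_est: "u \<in> Lambda \<Longrightarrow> v \<in> Vm u \<Longrightarrow> t > 0 \<Longrightarrow> norm (Dphi u t v) \<le> C * lam powr t * norm v"
  using hyp unfolding hyperbolic_splitting_def by blast

lemma hyp_P: "\<exists>(Pp::'a\<Rightarrow>'a\<Rightarrow>'a) (Pm::'a\<Rightarrow>'a\<Rightarrow>'a) (Pz::'a \<Rightarrow> 'a \<Rightarrow>\<^sub>L 'a).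
        continuous_on Lambda Pp \<and> continuous_on Lambda Pm \<and> continuous_on Lambda (\<lambda>x. blinfun_apply (Pz x)) \<and>
        (\<forall>u\<in>Lambda. \<forall>v. Pp u v \<in> Vp u \<and> Pm u v \<in> Vm u \<and> Pz u v \<in> V0 f u
                         \<and> v = Pp u v + Pm u v + Pz u v)"
  using hyp unfolding hyperbolic_splitting_def by (elim conjE) assumption

definition Qp :: "('a \<Rightarrow> 'a \<Rightarrow> 'a) \<times> ('a \<Rightarrow> 'a \<Rightarrow> 'a) \<times> ('a \<Rightarrow> 'a \<Rightarrow> 'a) \<Rightarrow> bool" where
  "Qp P \<longleftrightarrow> continuous_on Lambda (fst P) \<and> continuous_on Lambda (fst (snd P)) \<and> continuous_on Lambda (snd (snd P)) \<and>
        (\<forall>u\<in>Lambda. \<forall>v. fst P u v \<in> Vp u \<and> fst (snd P) u v \<in> Vm u \<and> snd (snd P) u v \<in> V0 f u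
                         \<and> v = fst P u v + fst (snd P) u v + snd (snd P) u v)"

definition "PT = (SOME P. Qp P)"

definition "Pp = fst PT"
definition "Pm = fst (snd PT)"
definition "Pz = snd (snd PT)"

lemma PT_prop: "continuous_on Lambda Pp \<and> continuous_on Lambda Pm \<and> continuous_on Lambda Pz \<and>
        (\<forall>u\<in>Lambda. \<forall>v. Pp u v \<in> Vp u \<and> Pm u v \<in> Vm u \<and> Pz u v \<in> V0 f u
                         \<and> v = Pp u v + Pm u v + Pz u v)"
proof -
  obtain A B :: "'a \<Rightarrow> 'a \<Rightarrow> 'a" and D :: "'a \<Rightarrow> 'a \<Rightarrow>\<^sub>L 'a" where ABD:
     "continuous_on Lambda A \<and> continuous_on Lambda B \<and> continuous_on Lambda (\<lambda>x. blinfun_apply (D x)) \<and>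
        (\<forall>u\<in>Lambda. \<forall>v. A u v \<in> Vp u \<and> B u v \<in> Vm u \<and> D u v \<in> V0 f u
                         \<and> v = A u v + B u v + D u v)"
    using hyp_P by blast
  have "Qp (A, B, \<lambda>x. blinfun_apply (D x))" unfolding Qp_def using ABD by simp
  then have "Qp PT" unfolding PT_def by (rule someI)
  then show ?thesis unfolding Pp_def Pm_def Pz_def Qp_def .
qed

lemma P_in: "u \<in> Lambda \<Longrightarrow> Pp u v \<in> Vp u \<and> Pm u v \<in> Vm u \<and> Pz u v \<in> V0 f u \<and> v = Pp u v + Pm u v + Pz u v"
  using PT_prop by blast

lemma P_cont: "continuous_on Lambda (\<lambda>u. Pp u v) \<and> continuous_on Lambda (\<lambda>u. Pm u v) \<and> continuous_on Lambda (\<lambda>u. Pz u v)"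
  using PT_prop continuous_on_product_then_coordinatewise[of Lambda Pp] continuous_on_product_then_coordinatewise[of Lambda Pm]
    continuous_on_product_then_coordinatewise[of Lambda Pz] by blast

lemma P_ident:
  assumes "u \<in> Lambda" "a \<in> Vp u" "b \<in> Vm u" "c \<in> V0 f u" "v = a + b + c"
  shows "Pp u v = a \<and> Pm u v = b \<and> Pz u v = c"
  using decomp_unique[OF assms(1) _ _ _ assms(2-4)] P_in[OF assms(1), of v] assms(5) by metis

lemma P_linear:
  assumes u: "u \<in> Lambda"
  shows "linear (Pp u) \<and> linear (Pm u) \<and> linear (Pz u)"
proof -
  have sp: "subspace (Vp u)" "subspace (Vm u)" using hyp_sub[OF u] by auto
  have add: "Pp u (x + y) = Pp u x + Pp u y \<and> Pm u (x + y) = Pm u x + Pm u y \<and> Pz u (x + y) = Pz u x + Pz u y" for x y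
  proof (rule P_ident[OF u])
    show "Pp u x + Pp u y \<in> Vp u" using P_in[OF u] sp(1) by (simp add: subspace_add)
    show "Pm u x + Pm u y \<in> Vm u" using P_in[OF u] sp(2) by (simp add: subspace_add)
    show "Pz u x + Pz u y \<in> V0 f u" using P_in[OF u] V0_sub by (simp add: subspace_add)
    have "x + y = (Pp u x + Pm u x + Pz u x) + (Pp u y + Pm u y + Pz u y)" using P_in[OF u] by metis
    then show "x + y = Pp u x + Pp u y + (Pm u x + Pm u y) + (Pz u x + Pz u y)" by (simp add: algebra_simps)
  qed
  have sc: "Pp u (c *\<^sub>R x) = c *\<^sub>R Pp u x \<and> Pm u (c *\<^sub>R x) = c *\<^sub>R Pm u x \<and> Pz u (c *\<^sub>R x) = c *\<^sub>R Pz u x" for c x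
  proof (rule P_ident[OF u])
    show "c *\<^sub>R Pp u x \<in> Vp u" using P_in[OF u] sp(1) by (simp add: subspace_scale)
    show "c *\<^sub>R Pm u x \<in> Vm u" using P_in[OF u] sp(2) by (simp add: subspace_scale)
    show "c *\<^sub>R Pz u x \<in> V0 f u" using P_in[OF u] V0_sub by (simp add: subspace_scale)
    have "c *\<^sub>R x = c *\<^sub>R (Pp u x + Pm u x + Pz u x)" using P_in[OF u] by metis
    then show "c *\<^sub>R x = c *\<^sub>R Pp u x + c *\<^sub>R Pm u x + c *\<^sub>R Pz u x" by (simp add: algebra_simps)
  qed
  show ?thesis using add sc by (auto intro!: linearI)
qed

lemma bound_on_Lambda:
  fixes P :: "'a \<Rightarrow> 'b::real_normed_vector"
  assumes "continuous_on Lambda P"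
  shows "\<exists>B>0. \<forall>u\<in>Lambda. norm (P u) \<le> B"
proof -
  have "compact (P ` Lambda)" by (rule compact_continuous_image[OF assms Lambda_compact])
  then have "bounded (P ` Lambda)" by (rule compact_imp_bounded)
  then obtain B where "B > 0" "\<forall>x\<in>P ` Lambda. norm x \<le> B" unfolding bounded_pos by blast
  then show ?thesis by auto
qed

lemma proj_bound:
  fixes P :: "'a \<Rightarrow> 'a \<Rightarrow> 'a"
  assumes cont: "\<And>v. continuous_on Lambda (\<lambda>u. P u v)" and lin: "\<And>u. u \<in> Lambda \<Longrightarrow> linear (P u)"
  shows "\<exists>B>0. \<forall>u\<in>Lambda. \<forall>v. norm (P u v) \<le> B * norm v"
proof -
  have "\<forall>b\<in>Basis. \<exists>B. B > 0 \<and> (\<forall>u\<in>Lambda. norm (P u b) \<le> B)"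
    using bound_on_Lambda[OF cont] by blast
  then obtain Bf where Bf: "\<And>b. b \<in> Basis \<Longrightarrow> Bf b > 0 \<and> (\<forall>u\<in>Lambda. norm (P u b) \<le> Bf b)"
    by metis
  define B where "B = (\<Sum>b\<in>Basis. Bf b)"
  have Bpos: "B > 0" unfolding B_def using Bf by (intro sum_pos) auto
  have "norm (P u v) \<le> B * norm v" if u: "u \<in> Lambda" for u v
  proof -
    interpret linear "P u" using lin[OF u] .
    have "P u v = P u (\<Sum>b\<in>Basis. (v \<bullet> b) *\<^sub>R b)" by (simp add: euclidean_representation)
    also have "\<dots> = (\<Sum>b\<in>Basis. (v \<bullet> b) *\<^sub>R P u b)" by (simp add: sum scale)
    finally have "norm (P u v) \<le> (\<Sum>b\<in>Basis. norm ((v \<bullet> b) *\<^sub>R P u b))"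
      using norm_sum by metis
    also have "\<dots> \<le> (\<Sum>b\<in>Basis. norm v * Bf b)"
    proof (rule sum_mono)
      fix b :: 'a assume b: "b \<in> Basis"
      have "\<bar>v \<bullet> b\<bar> \<le> norm v" using b by (rule Basis_le_norm)
      moreover have "norm (P u b) \<le> Bf b" using Bf[OF b] u by blast
      ultimately show "norm ((v \<bullet> b) *\<^sub>R P u b) \<le> norm v * Bf b"
        by (simp add: mult_mono')
    qed
    also have "\<dots> = B * norm v" by (simp add: B_def sum_distrib_left mult.commute)
    finally show ?thesis .
  qed
  with Bpos show ?thesis by blast
qed

definition "Pb = (SOME B. B > 0 \<and> (\<forall>u\<in>Lambda. \<forall>v. norm (Pp u v) \<le> B * norm v \<and> norm (Pm u v) \<le> B * norm v \<and> norm (Pz u v) \<le> B * norm v))"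

lemma Pb: "Pb > 0 \<and> (\<forall>u\<in>Lambda. \<forall>v. norm (Pp u v) \<le> Pb * norm v \<and> norm (Pm u v) \<le> Pb * norm v \<and> norm (Pz u v) \<le> Pb * norm v)"
proof -
  obtain B1 where B1: "B1 > 0" "\<forall>u\<in>Lambda. \<forall>v. norm (Pp u v) \<le> B1 * norm v"
    using proj_bound[of Pp] P_cont P_linear by blast
  obtain B2 where B2: "B2 > 0" "\<forall>u\<in>Lambda. \<forall>v. norm (Pm u v) \<le> B2 * norm v"
    using proj_bound[of Pm] P_cont P_linear by blast
  obtain B3 where B3: "B3 > 0" "\<forall>u\<in>Lambda. \<forall>v. norm (Pz u v) \<le> B3 * norm v"
    using proj_bound[of Pz] P_cont P_linear by blast
  define M where "M = max B1 (max B2 B3)"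
  have le: "B1 * norm v \<le> M * norm v" "B2 * norm v \<le> M * norm v" "B3 * norm v \<le> M * norm v" for v :: 'a
    unfolding M_def by (simp_all add: mult_right_mono)
  have "M > 0 \<and> (\<forall>u\<in>Lambda. \<forall>v. norm (Pp u v) \<le> M * norm v \<and> norm (Pm u v) \<le> M * norm v \<and> norm (Pz u v) \<le> M * norm v)"
    using B1 B2 B3 le unfolding M_def by (meson less_max_iff_disj order_trans)
  then show ?thesis unfolding Pb_def by (rule someI)
qed

lemma Pp_bound: "u \<in> Lambda \<Longrightarrow> norm (Pp u v) \<le> Pb * norm v" using Pb by blast
lemma Pm_bound: "u \<in> Lambda \<Longrightarrow> norm (Pm u v) \<le> Pb * norm v" using Pb by blast
lemma Pz_bound: "u \<in> Lambda \<Longrightarrow> norm (Pz u v) \<le> Pb * norm v" using Pb by blast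

end



context setting begin

lemma F_cont: "continuous_on UNIV F"
proof -
  have c1: "continuous_on UNIV (\<lambda>w::'a. G' (0, w, 0))"
    by (rule continuous_on_compose2[OF G'_cont]) (auto intro!: continuous_intros)
  have "continuous_on UNIV (\<lambda>w::'a. G' (0, w, 0) (0, 0, 1))"
    using c1 by (auto intro!: continuous_intros)
  then show ?thesis unfolding F_eq[abs_def] .
qed

lemma Lambda_bounded: "\<exists>R>0. \<forall>u\<in>Lambda. norm u \<le> R"
  using compact_imp_bounded[OF Lambda_compact] unfolding bounded_pos by blast

lemma q_prop:
  assumes w: "w \<in> Lambda"
  shows "(F w \<noteq> 0 \<longrightarrow> (\<Sum>b\<in>Basis. norm (Pz w b)) \<ge> 1) \<and> (F w = 0 \<longrightarrow> (\<Sum>b\<in>Basis. norm (Pz w b)) = 0)"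
proof (intro conjI impI)
  assume F0: "F w = 0"
  have "Pz w b = 0" for b
  proof -
    have "Pz w b \<in> V0 f w" using P_in[OF w] by blast
    then show ?thesis unfolding V0_eq F0 by auto
  qed
  then show "(\<Sum>b\<in>Basis. norm (Pz w b)) = 0" by simp
next
  assume F0: "F w \<noteq> 0"
  interpret linear "Pz w" using P_linear[OF w] by blast
  have "Pz w (F w) = F w"
    using P_ident[OF w, of 0 0 "F w" "F w"] hyp_sub[OF w] F_in_V0[of 1 w] by (simp add: subspace_0)
  also have "Pz w (F w) = (\<Sum>b\<in>Basis. (F w \<bullet> b) *\<^sub>R Pz w b)"
    by (subst euclidean_representation[symmetric, of "F w"]) (simp add: sum scale)
  finally have "norm (F w) = norm (\<Sum>b\<in>Basis. (F w \<bullet> b) *\<^sub>R Pz w b)" by simp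
  also have "\<dots> \<le> (\<Sum>b\<in>Basis. norm ((F w \<bullet> b) *\<^sub>R Pz w b))" by (rule norm_sum)
  also have "\<dots> \<le> (\<Sum>b\<in>Basis. norm (F w) * norm (Pz w b))"
  proof (rule sum_mono)
    fix b :: 'a assume b: "b \<in> Basis"
    show "norm ((F w \<bullet> b) *\<^sub>R Pz w b) \<le> norm (F w) * norm (Pz w b)"
      using Basis_le_norm[OF b, of "F w"] by (simp add: mult_right_mono)
  qed
  also have "\<dots> = norm (F w) * (\<Sum>b\<in>Basis. norm (Pz w b))" by (simp add: sum_distrib_left)
  finally show "(\<Sum>b\<in>Basis. norm (Pz w b)) \<ge> 1" using F0 by simp
qed

lemma F_lower: "\<exists>d>0. \<forall>w\<in>Lambda. F w \<noteq> 0 \<longrightarrow> norm (F w) \<ge> d"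
proof -
  define q where "q w = (\<Sum>b\<in>Basis. norm (Pz w b))" for w
  have qc: "continuous_on Lambda q" unfolding q_def
    using P_cont by (intro continuous_intros) auto
  define S where "S = Lambda \<inter> q -` {1..}"
  have "closed S" unfolding S_def
    by (rule continuous_closed_preimage[OF qc compact_imp_closed[OF Lambda_compact]]) simp
  then have cS: "compact S" using Lambda_compact unfolding S_def
    by (metis Int_absorb1 Int_lower1 compact_Int_closed)
  have S_eq: "w \<in> S \<longleftrightarrow> w \<in> Lambda \<and> F w \<noteq> 0" for w
    using q_prop[of w] unfolding S_def q_def by auto
  show ?thesis
  proof (cases "S = {}")
    case True
    then show ?thesis using S_eq by (auto intro!: exI[of _ 1])
  next
    case False
    have "continuous_on S (\<lambda>w. norm (F w))"
      using F_cont by (intro continuous_intros) (auto intro: continuous_on_subset)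
    then obtain w0 where w0: "w0 \<in> S" "\<forall>y\<in>S. norm (F w0) \<le> norm (F y)"
      using continuous_attains_inf[OF cS False] by blast
    have "norm (F w0) > 0" using S_eq w0(1) by auto
    then show ?thesis using w0 S_eq by blast
  qed
qed

lemma Pz_coef: "\<exists>Kz>0. \<forall>w\<in>Lambda. \<forall>x. \<exists>c. Pz w x = c *\<^sub>R F w \<and> \<bar>c\<bar> \<le> Kz * norm x"
proof -
  obtain d where d: "d > 0" "\<forall>w\<in>Lambda. F w \<noteq> 0 \<longrightarrow> norm (F w) \<ge> d" using F_lower by blast
  have "\<exists>c. Pz w x = c *\<^sub>R F w \<and> \<bar>c\<bar> \<le> (Pb / d) * norm x" if w: "w \<in> Lambda" for w x
  proof -
    obtain c where c: "Pz w x = c *\<^sub>R F w" using P_in[OF w, of x] unfolding V0_eq by blast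
    show ?thesis
    proof (cases "F w = 0")
      case True
      then show ?thesis using c Pb d by (intro exI[of _ 0]) auto
    next
      case False
      have "\<bar>c\<bar> * d \<le> \<bar>c\<bar> * norm (F w)" using d w False by (simp add: mult_left_mono)
      also have "\<dots> = norm (Pz w x)" using c by simp
      also have "\<dots> \<le> Pb * norm x" by (rule Pz_bound[OF w])
      finally have "\<bar>c\<bar> \<le> Pb * norm x / d" using d by (simp add: field_simps)
      then show ?thesis using c by (intro exI[of _ c]) simp
    qed
  qed
  moreover have "Pb / d > 0" using Pb d by simp
  ultimately show ?thesis by blast
qed

lemma G'_bound_set:
  assumes "compact K"
  shows "\<exists>B>0. \<forall>x\<in>K. norm (G' x) \<le> B"
proof -
  have "compact (G' ` K)" by (rule compact_continuous_image[OF continuous_on_subset[OF G'_cont] assms]) simp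
  then have "bounded (G' ` K)" by (rule compact_imp_bounded)
  then show ?thesis unfolding bounded_pos by blast
qed

lemma Dphi_bound: "\<exists>K1>0. \<forall>u\<in>Lambda. \<forall>t\<in>{-1..1}. \<forall>v. norm (Dphi u t v) \<le> K1 * norm v"
proof -
  define K where "K = (\<lambda>(u, t). (0::real, u, t)) ` (Lambda \<times> {-1..1::real})"
  have "compact K" unfolding K_def
    by (intro compact_continuous_image compact_Times Lambda_compact compact_Icc; auto intro!: continuous_intros simp: case_prod_beta)
  then obtain B where B: "B > 0" "\<forall>x\<in>K. norm (G' x) \<le> B" using G'_bound_set by blast
  have "norm (Dphi u t v) \<le> B * norm v" if "u \<in> Lambda" "t \<in> {-1..1}" for u t v
  proof -
    have "(0, u, t) \<in> K" unfolding K_def using that by force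
    then have nb: "norm (G' (0, u, t)) \<le> B" using B by blast
    have "norm (Dphi u t v) \<le> norm (G' (0, u, t)) * norm ((0::real, v, 0::real))"
      unfolding Dphi_eq by (rule norm_blinfun)
    also have "\<dots> \<le> B * norm v" using nb by (simp add: norm_Pair mult_right_mono)
    finally show ?thesis .
  qed
  then show ?thesis using B by blast
qed

lemma dsphi_zero: "dsphi u 0 = 0"
proof -
  have "((\<lambda>s. phi s u 0) has_vector_derivative 0) (at 0)"
    using phi_init by simp
  then show ?thesis using vector_derivative_unique_at dsphi_def by blast
qed

lemma dsphi_bound: "\<exists>Ks>0. \<forall>u\<in>Lambda. \<forall>h\<in>{0..1}. norm (dsphi u h) \<le> Ks * h"
proof -
  obtain R where R: "R > 0" "\<forall>u\<in>Lambda. norm u \<le> R" using Lambda_bounded by blast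
  obtain L where L: "\<forall>x\<in>cball 0 (R + 1). \<forall>y\<in>cball 0 (R + 1). norm (G' x - G' y) \<le> L * norm (x - y)"
    using G'_lip by blast
  have "norm (dsphi u h) \<le> max L 1 * h" if u: "u \<in> Lambda" and h: "h \<in> {0..1}" for u h
  proof -
    have n1: "norm ((0::real, u, h)) \<le> R + 1"
    proof -
      have "norm ((0::real, u, h)) \<le> norm u + norm h" using sqrt_sum_squares_le_sum_abs[of "norm u" h] by (simp add: norm_Pair)
      then show ?thesis using R u h by auto
    qed
    have n2: "norm ((0::real, u, 0::real)) \<le> R + 1" using R(2) u by (simp add: norm_Pair) (smt (verit))
    have "dsphi u h = dsphi u h - dsphi u 0" by (simp add: dsphi_zero)
    also have "\<dots> = blinfun_apply (G' (0, u, h) - G' (0, u, 0)) (1, 0, 0)"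
      by (simp add: dsphi_eq blinfun.diff_left)
    finally have "norm (dsphi u h) \<le> norm (G' (0, u, h) - G' (0, u, 0)) * norm ((1::real, 0::'a, 0::real))"
      using norm_blinfun by metis
    also have "\<dots> = norm (G' (0, u, h) - G' (0, u, 0))" by (simp add: norm_Pair)
    also have "\<dots> \<le> L * norm ((0::real, u, h) - (0, u, 0))"
    proof -
      have c1: "(0::real, u, h) \<in> cball 0 (R + 1)" using n1 by (simp only: mem_cball_0)
      have c2: "(0::real, u, 0::real) \<in> cball 0 (R + 1)" using n2 by (simp only: mem_cball_0)
      show ?thesis using L c1 c2 by blast
    qed
    also have "\<dots> = L * h" using h by (simp add: norm_Pair)
    also have "\<dots> \<le> max L 1 * h" using h by (simp add: mult_right_mono)
    finally show ?thesis .
  qed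
  then show ?thesis by (intro exI[of _ "max L 1"]) auto
qed

definition JD where "JD = (SOME g'. (\<forall>x. ((\<lambda>(u, s). J u s) has_derivative blinfun_apply (g' x)) (at x)) \<and> continuous_on UNIV g')"

lemma JD_prop: "(\<forall>x. ((\<lambda>(u, s). J u s) has_derivative blinfun_apply (JD x)) (at x)) \<and> continuous_on UNIV JD"
  using J_C1 unfolding C1_map_def JD_def by (rule someI_ex)

lemma DJ_eq: "DJ u s v = JD (u, s) (v, 0)"
proof -
  have d0: "((\<lambda>x. (x, s)) has_derivative (\<lambda>v. (v, 0))) (at u)"
    by (auto intro!: derivative_eq_intros)
  have "((\<lambda>x. (\<lambda>(u, s). J u s) (x, s)) has_derivative (\<lambda>v. JD (u, s) (v, 0))) (at u)"
    using has_derivative_compose[OF d0, of "\<lambda>(u, s). J u s"] JD_prop by blast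
  then have "((\<lambda>x. J x s) has_derivative (\<lambda>v. JD (u, s) (v, 0))) (at u)" by simp
  then have "blinfun_apply (DJ u s) = (\<lambda>v. JD (u, s) (v, 0))" using DJ_def has_derivative_unique by blast
  then show ?thesis by simp
qed

lemma DJ_bound: "\<exists>Jb>0. \<forall>u\<in>Lambda. \<forall>v. \<bar>DJ u 0 v\<bar> \<le> Jb * norm v"
proof -
  have "compact ((\<lambda>u. (u, 0::real)) ` Lambda)"
    by (intro compact_continuous_image Lambda_compact) (auto intro!: continuous_intros)
  then have "compact (JD ` (\<lambda>u. (u, 0::real)) ` Lambda)"
    by (rule compact_continuous_image[OF continuous_on_subset[OF conjunct2[OF JD_prop]], rotated]) simp
  then have "bounded (JD ` (\<lambda>u. (u, 0::real)) ` Lambda)" by (rule compact_imp_bounded)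
  then obtain B where B: "B > 0" "\<forall>x\<in>JD ` (\<lambda>u. (u, 0::real)) ` Lambda. norm x \<le> B"
    unfolding bounded_pos by blast
  have "\<bar>DJ u 0 v\<bar> \<le> B * norm v" if "u \<in> Lambda" for u v
  proof -
    have nb: "norm (JD (u, 0)) \<le> B" using B that by blast
    have "\<bar>DJ u 0 v\<bar> = norm (JD (u, 0) (v, 0))" by (simp add: DJ_eq)
    also have "\<dots> \<le> norm (JD (u, 0)) * norm ((v, 0::real))" by (rule norm_blinfun)
    also have "\<dots> \<le> B * norm v" using nb by (simp add: norm_Pair mult_right_mono)
    finally show ?thesis .
  qed
  then show ?thesis using B by blast
qed

end



context setting begin

definition traj :: "real \<Rightarrow> int \<Rightarrow> 'a" where "traj h i = phi 0 u0 (real_of_int i * h)"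

lemma traj_in: "traj h i \<in> Lambda"
  unfolding traj_def using Lambda_inv u0_in by blast

lemma traj_step: "traj h (i + 1) = phi 0 (traj h i) h"
  unfolding traj_def group by (simp add: algebra_simps)

lemma traj_steps: "traj h (i + int k) = phi 0 (traj h i) (real k * h)"
  unfolding traj_def group by (simp add: algebra_simps)

lemma shadow_rec:
  assumes sd: "shadowing_direction phi h (traj h) vinf etainf"
  shows "vinf (i + 1) = Dphi (traj h i) h (vinf i) + dsphi (traj h i) h + (h * etainf i) *\<^sub>R F (traj h (i + 1))"
proof -
  obtain eps us taus dus dtaus where eps: "eps > 0"
    and us0: "us 0 = traj h" and taus0: "taus 0 = (\<lambda>i. 1)"
    and rec: "\<forall>s i. \<bar>s\<bar> < eps \<longrightarrow> us s i = phi s (us s (i - 1)) (h * taus s (i - 1))"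
    and dus: "\<forall>s i. \<bar>s\<bar> < eps \<longrightarrow> ((\<lambda>r. us r i) has_vector_derivative dus s i) (at s)"
    and dtaus: "\<forall>s i. \<bar>s\<bar> < eps \<longrightarrow> ((\<lambda>r. taus r i) has_real_derivative dtaus s i) (at s)"
    and vinf: "vinf = dus 0" and etainf: "etainf = dtaus 0"
    using sd unfolding shadowing_direction_def by blast
  have du: "((\<lambda>r. us r i) has_derivative (\<lambda>r. r *\<^sub>R dus 0 i)) (at 0)"
    using dus eps unfolding has_vector_derivative_def by simp
  have dt: "((\<lambda>r. h * taus r i) has_derivative (\<lambda>r. h * (dtaus 0 i * r))) (at 0)"
    using dtaus eps by (auto intro!: derivative_eq_intros has_field_derivative_imp_has_derivative)
  have dp: "((\<lambda>r. (r, us r i, h * taus r i)) has_derivative (\<lambda>r. (r, r *\<^sub>R dus 0 i, h * (dtaus 0 i * r)))) (at 0)"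
    by (intro has_derivative_Pair has_derivative_ident du dt)
  have "((\<lambda>r. phi (fst (r, us r i, h * taus r i)) (fst (snd (r, us r i, h * taus r i))) (snd (snd (r, us r i, h * taus r i))))
      has_derivative (\<lambda>v. G' (0, us 0 i, h * taus 0 i) (v, v *\<^sub>R dus 0 i, h * (dtaus 0 i * v)))) (at 0)"
    using phi_comp_deriv[OF dp] by simp
  then have d1: "((\<lambda>r. phi r (us r i) (h * taus r i)) has_derivative (\<lambda>v. G' (0, traj h i, h) (v, v *\<^sub>R dus 0 i, h * (dtaus 0 i * v)))) (at 0)"
    using us0 taus0 by simp
  have eq: "us r (i + 1) = phi r (us r i) (h * taus r i)" if "r \<in> ball 0 eps" for r
  proof -
    have "\<bar>r\<bar> < eps" using that by (simp add: dist_norm)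
    then show ?thesis using rec[rule_format, of r "i + 1"] by simp
  qed
  have d2: "((\<lambda>r. us r (i + 1)) has_derivative (\<lambda>v. G' (0, traj h i, h) (v, v *\<^sub>R dus 0 i, h * (dtaus 0 i * v)))) (at 0)"
  proof (rule has_derivative_transform_within_open[OF d1 open_ball[of 0 eps]])
    show "(0::real) \<in> ball 0 eps" using eps by simp
    show "phi x (us x i) (h * taus x i) = us x (i + 1)" if "x \<in> ball 0 eps" for x using eq[OF that] by simp
  qed
  have d3: "((\<lambda>r. us r (i + 1)) has_derivative (\<lambda>r. r *\<^sub>R dus 0 (i + 1))) (at 0)"
    using dus eps unfolding has_vector_derivative_def by simp
  have "(\<lambda>r. r *\<^sub>R dus 0 (i + 1)) = (\<lambda>v. G' (0, traj h i, h) (v, v *\<^sub>R dus 0 i, h * (dtaus 0 i * v)))"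
    using has_derivative_unique[OF d3 d2] .
  from fun_cong[OF this, of 1] have "dus 0 (i + 1) = G' (0, traj h i, h) (1, dus 0 i, h * dtaus 0 i)" by simp
  also have "G' (0, traj h i, h) (1, dus 0 i, h * dtaus 0 i) = G' (0, traj h i, h) (1, 0, 0) + G' (0, traj h i, h) (0, dus 0 i, 0) + (h * dtaus 0 i) *\<^sub>R G' (0, traj h i, h) (0, 0, 1)"
  proof -
    have "(1::real, dus 0 i, h * dtaus 0 i) = (1, 0, 0) + (0, dus 0 i, 0) + (h * dtaus 0 i) *\<^sub>R (0, 0, 1)"
      by simp
    then show ?thesis by (simp only: blinfun.add_right blinfun.scaleR_right)
  qed
  also have "\<dots> = dsphi (traj h i) h + Dphi (traj h i) h (dus 0 i) + (h * dtaus 0 i) *\<^sub>R F (traj h (i + 1))"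
    by (simp only: dsphi_eq Dphi_eq f_eq[of 0 "traj h i" h, symmetric] F_def traj_step)
  finally show ?thesis unfolding vinf etainf by (simp add: algebra_simps)
qed

lemma shadow_bounded:
  assumes sd: "shadowing_direction phi h (traj h) vinf etainf"
  shows "\<exists>B. \<forall>i. norm (vinf i) \<le> B"
proof -
  obtain eps us taus dus dtaus where eps: "eps > 0"
    and us0: "us 0 = traj h" and taus0: "taus 0 = (\<lambda>i. 1)"
    and rec: "\<forall>s i. \<bar>s\<bar> < eps \<longrightarrow> us s i = phi s (us s (i - 1)) (h * taus s (i - 1))"
    and dus: "\<forall>s i. \<bar>s\<bar> < eps \<longrightarrow> ((\<lambda>r. us r i) has_vector_derivative dus s i) (at s)"
    and dtaus: "\<forall>s i. \<bar>s\<bar> < eps \<longrightarrow> ((\<lambda>r. taus r i) has_real_derivative dtaus s i) (at s)"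
    and bnd: "\<exists>B. \<forall>s i. \<bar>s\<bar> < eps \<longrightarrow> norm (dus s i) \<le> B \<and> \<bar>dtaus s i\<bar> \<le> B"
    and vinf: "vinf = dus 0" and etainf: "etainf = dtaus 0"
    using sd unfolding shadowing_direction_def by blast
  obtain B where "\<forall>s i. \<bar>s\<bar> < eps \<longrightarrow> norm (dus s i) \<le> B \<and> \<bar>dtaus s i\<bar> \<le> B" using bnd by blast
  then have "norm (vinf i) \<le> B" for i using eps unfolding vinf by simp
  then show ?thesis by blast
qed

end



context setting begin

lemma traj_shift: "phi 0 (traj h i) (real k * h) = traj h (i + int k)"
  using traj_steps by simp

lemma fwd_zero:
  assumes "\<forall>j. i \<le> j \<and> j < i + int k \<longrightarrow> w (j + 1) = Dphi (traj h j) h (w j)"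
  shows "w (i + int k) = Dphi (traj h i) (real k * h) (w i)"
  using assms
proof (induction k)
  case 0
  then show ?case by (simp add: Dphi_zero)
next
  case (Suc k)
  have IH: "w (i + int k) = Dphi (traj h i) (real k * h) (w i)" using Suc by simp
  have "w (i + int (Suc k)) = w (i + int k + 1)" by (simp add: algebra_simps)
  also have "\<dots> = Dphi (traj h (i + int k)) h (w (i + int k))" using Suc.prems by simp
  also have "\<dots> = Dphi (phi 0 (traj h i) (real k * h)) h (Dphi (traj h i) (real k * h) (w i))"
    using IH traj_shift by simp
  also have "\<dots> = Dphi (traj h i) (real k * h + h) (w i)" by (rule Dphi_chain[symmetric])
  finally show ?case by (simp add: algebra_simps)
qed

lemma fwd_forced:
  assumes "\<forall>j. i \<le> j \<and> j < i + int k \<longrightarrow> w (j + 1) = Dphi (traj h j) h (w j) + r j"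
  shows "w (i + int k) = Dphi (traj h i) (real k * h) (w i) + (\<Sum>j<k. Dphi (traj h (i + int j + 1)) (real (k - 1 - j) * h) (r (i + int j)))"
  using assms
proof (induction k)
  case 0
  then show ?case by (simp add: Dphi_zero)
next
  case (Suc k)
  let ?S = "\<lambda>k. (\<Sum>j<k. Dphi (traj h (i + int j + 1)) (real (k - 1 - j) * h) (r (i + int j)))"
  have IH: "w (i + int k) = Dphi (traj h i) (real k * h) (w i) + ?S k" using Suc by simp
  have A: "Dphi (traj h (i + int k)) h (Dphi (traj h i) (real k * h) (w i)) = Dphi (traj h i) (real (Suc k) * h) (w i)"
    using Dphi_chain[of "traj h i" "real k * h" h "w i"] traj_shift[of h i k] by (simp add: algebra_simps)
  have B: "Dphi (traj h (i + int k)) h (Dphi (traj h (i + int j + 1)) (real (k - 1 - j) * h) (r (i + int j)))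
      = Dphi (traj h (i + int j + 1)) (real (Suc k - 1 - j) * h) (r (i + int j))" if j: "j < k" for j
  proof -
    have e1: "phi 0 (traj h (i + int j + 1)) (real (k - 1 - j) * h) = traj h (i + int k)"
      using traj_shift[of h "i + int j + 1" "k - 1 - j"] j by (simp add: of_nat_diff)
    have e2: "real (k - 1 - j) * h + h = real (Suc k - 1 - j) * h" using j by (simp add: of_nat_diff algebra_simps)
    show ?thesis using Dphi_chain[of "traj h (i + int j + 1)" "real (k - 1 - j) * h" h] e1 e2 by simp
  qed
  have "w (i + int (Suc k)) = w (i + int k + 1)" by (simp add: algebra_simps)
  also have "\<dots> = Dphi (traj h (i + int k)) h (w (i + int k)) + r (i + int k)" using Suc.prems by simp
  also have "\<dots> = Dphi (traj h i) (real (Suc k) * h) (w i) + (\<Sum>j<k. Dphi (traj h (i + int j + 1)) (real (Suc k - 1 - j) * h) (r (i + int j))) + r (i + int k)"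
    unfolding IH blinfun.add_right blinfun.sum_right A using B by simp
  also have "\<dots> = Dphi (traj h i) (real (Suc k) * h) (w i) + ?S (Suc k)"
    by (simp add: Dphi_zero)
  finally show ?case .
qed

lemma bwd_forced:
  assumes "\<forall>j. i \<le> j \<and> j < i + int k \<longrightarrow> w (j + 1) = Dphi (traj h j) h (w j) + r j"
  shows "w i = Dphi (traj h (i + int k)) (- (real k * h)) (w (i + int k)) - (\<Sum>j<k. Dphi (traj h (i + int j + 1)) (- (real (Suc j) * h)) (r (i + int j)))"
proof -
  have F: "w (i + int k) = Dphi (traj h i) (real k * h) (w i) + (\<Sum>j<k. Dphi (traj h (i + int j + 1)) (real (k - 1 - j) * h) (r (i + int j)))"
    by (rule fwd_forced[OF assms])
  have inv0: "Dphi (traj h (i + int k)) (- (real k * h)) (Dphi (traj h i) (real k * h) (w i)) = w i"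
    using Dphi_inv[of "traj h i" "real k * h" "w i"] traj_shift by simp
  have inv1: "Dphi (traj h (i + int k)) (- (real k * h)) (Dphi (traj h (i + int j + 1)) (real (k - 1 - j) * h) (r (i + int j)))
     = Dphi (traj h (i + int j + 1)) (- (real (Suc j) * h)) (r (i + int j))" if j: "j < k" for j
  proof -
    have e1: "phi 0 (traj h (i + int j + 1)) (real (k - 1 - j) * h) = traj h (i + int k)"
      using traj_shift[of h "i + int j + 1" "k - 1 - j"] j by (simp add: of_nat_diff)
    have e2: "real (k - 1 - j) * h + - (real k * h) = - (real (Suc j) * h)" using j by (simp add: of_nat_diff algebra_simps)
    show ?thesis using Dphi_chain[of "traj h (i + int j + 1)" "real (k - 1 - j) * h" "- (real k * h)"] e1 e2 by simp
  qed
  have "Dphi (traj h (i + int k)) (- (real k * h)) (w (i + int k)) = w i + (\<Sum>j<k. Dphi (traj h (i + int j + 1)) (- (real (Suc j) * h)) (r (i + int j)))"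
    unfolding F blinfun.add_right blinfun.sum_right inv0 using inv1 by simp
  then show ?thesis by (simp add: algebra_simps)
qed

lemma powr_nat: "lam powr (real k * h) = (lam powr h) ^ k"
  using lam by (simp add: powr_realpow[symmetric] powr_powr mult.commute)

end



context setting begin

definition "Cm = max C 1"

lemma Cm_ge: "Cm \<ge> 1" "Cm \<ge> C" "Cm > 0" unfolding Cm_def by auto

lemma Vp_est': "u \<in> Lambda \<Longrightarrow> v \<in> Vp u \<Longrightarrow> t \<le> 0 \<Longrightarrow> norm (Dphi u t v) \<le> Cm * lam powr (- t) * norm v"
proof -
  assume u: "u \<in> Lambda" and v: "v \<in> Vp u" and t: "t \<le> 0"
  show ?thesis
  proof (cases "t = 0")
    case True
    then show ?thesis using Cm_ge lam mult_right_mono[of 1 Cm "norm v"] by (simp add: Dphi_zero)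
  next
    case False
    then have "norm (Dphi u t v) \<le> C * lam powr (- t) * norm v" using Vp_est[OF u v] t by simp
    also have "\<dots> \<le> Cm * lam powr (- t) * norm v" using Cm_ge by (simp add: mult_right_mono)
    finally show ?thesis .
  qed
qed

lemma Vm_est': "u \<in> Lambda \<Longrightarrow> v \<in> Vm u \<Longrightarrow> t \<ge> 0 \<Longrightarrow> norm (Dphi u t v) \<le> Cm * lam powr t * norm v"
proof -
  assume u: "u \<in> Lambda" and v: "v \<in> Vm u" and t: "t \<ge> 0"
  show ?thesis
  proof (cases "t = 0")
    case True
    then show ?thesis using Cm_ge lam mult_right_mono[of 1 Cm "norm v"] by (simp add: Dphi_zero)
  next
    case False
    then have "norm (Dphi u t v) \<le> C * lam powr t * norm v" using Vm_est[OF u v] t by simp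
    also have "\<dots> \<le> Cm * lam powr t * norm v" using Cm_ge by (simp add: mult_right_mono)
    finally show ?thesis .
  qed
qed

lemma proj_step:
  assumes u: "u \<in> Lambda" and x': "x' = Dphi u h x + r + c *\<^sub>R F (phi 0 u h)"
  shows "Pp (phi 0 u h) x' = Dphi u h (Pp u x) + Pp (phi 0 u h) r \<and> Pm (phi 0 u h) x' = Dphi u h (Pm u x) + Pm (phi 0 u h) r"
proof -
  let ?u = "phi 0 u h"
  have u': "?u \<in> Lambda" using Lambda_inv u by blast
  have sp: "subspace (Vp ?u)" "subspace (Vm ?u)" using hyp_sub[OF u'] by auto
  have xd: "x = Pp u x + Pm u x + Pz u x" and rd: "r = Pp ?u r + Pm ?u r + Pz ?u r"
    using P_in[OF u] P_in[OF u'] by blast+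
  have "x' = (Dphi u h (Pp u x) + Pp ?u r) + (Dphi u h (Pm u x) + Pm ?u r) + (Dphi u h (Pz u x) + Pz ?u r + c *\<^sub>R F ?u)"
  proof -
    have "Dphi u h x = Dphi u h (Pp u x) + Dphi u h (Pm u x) + Dphi u h (Pz u x)"
      by (subst xd) (simp add: blinfun.add_right)
    then show ?thesis using x' rd by (simp add: algebra_simps)
  qed
  moreover have "Dphi u h (Pp u x) + Pp ?u r \<in> Vp ?u"
    using Vp_inv[OF u] P_in[OF u] P_in[OF u'] sp(1) by (simp add: subspace_add)
  moreover have "Dphi u h (Pm u x) + Pm ?u r \<in> Vm ?u"
    using Vm_inv[OF u] P_in[OF u] P_in[OF u'] sp(2) by (simp add: subspace_add)
  moreover have "Dphi u h (Pz u x) + Pz ?u r + c *\<^sub>R F ?u \<in> V0 f ?u"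
    using V0_inv P_in[OF u] P_in[OF u'] V0_sub F_in_V0 by (simp add: subspace_add)
  ultimately show ?thesis using P_ident[OF u'] by blast
qed

lemma q_facts: "0 < h \<Longrightarrow> 0 < lam powr h \<and> lam powr h < 1"
  using lam powr_less_mono2[of h lam 1] by simp

lemma geom_le: fixes q :: real assumes "0 < q" "q < 1" shows "(\<Sum>j<k. q ^ j) \<le> 1 / (1 - q)"
proof -
  have "(\<Sum>j<k. q ^ j) = (1 - q ^ k) / (1 - q)" using assms sum_gp_strict[of q k] by simp
  also have "\<dots> \<le> 1 / (1 - q)" using assms by (simp add: divide_right_mono)
  finally show ?thesis .
qed

lemma small_pow: fixes q e :: real assumes "0 < q" "q < 1" "e > 0" shows "\<exists>k::nat. q ^ k < e"
proof -
  have "(\<lambda>n::nat. q ^ n) \<longlonglongrightarrow> 0" using assms by (intro LIMSEQ_power_zero) simp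
  from LIMSEQ_D[OF this assms(3)] obtain n where "\<forall>m\<ge>n. norm (q ^ m - 0) < e" by blast
  then show ?thesis using assms by auto
qed

lemma limit_arg:
  fixes a b B q :: real
  assumes q: "0 < q" "q < 1" and B: "B \<ge> 0" and all: "\<And>k. a \<le> Cm * q ^ Suc k * B + b"
  shows "a \<le> b"
proof (rule ccontr)
  assume "\<not> a \<le> b"
  then have e: "a - b > 0" by simp
  obtain k where k: "q ^ k < (a - b) / (Cm * (B + 1))"
    using small_pow[OF q, of "(a - b) / (Cm * (B + 1))"] e Cm_ge B by auto
  have "q ^ Suc k \<le> q ^ k" using q by (simp add: power_decreasing)
  then have "q ^ Suc k < (a - b) / (Cm * (B + 1))" using k by simp
  moreover have pos: "Cm * (B + 1) > 0" using Cm_ge B by simp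
  ultimately have "q ^ Suc k * (Cm * (B + 1)) < a - b" by (simp add: less_divide_eq)
  then have "Cm * (B + 1) * q ^ Suc k < a - b" by (simp add: mult.commute)
  moreover have "Cm * q ^ Suc k * B \<le> Cm * (B + 1) * q ^ Suc k" using Cm_ge q B by (simp add: mult_left_mono algebra_simps)
  ultimately show False using all[of k] by linarith
qed

lemma unstable_bound:
  assumes h: "0 < h" and w_in: "\<forall>i. w i \<in> Vp (traj h i)" and r_in: "\<forall>i. r i \<in> Vp (traj h (i + 1))"
    and rec: "\<forall>i. w (i + 1) = Dphi (traj h i) h (w i) + r i" and rb: "\<forall>i. norm (r i) \<le> \<rho>"
    and wb: "\<forall>i. norm (w i) \<le> B"
  shows "norm (w i) \<le> Cm * \<rho> / (1 - lam powr h)"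
proof -
  define q where "q = lam powr h"
  have q: "0 < q" "q < 1" using q_facts[OF h] unfolding q_def by auto
  have B0: "B \<ge> 0" using wb norm_ge_zero order_trans by blast
  have r0: "\<rho> \<ge> 0" using rb norm_ge_zero order_trans by blast
  have "norm (w i) \<le> Cm * q ^ Suc k * B + Cm * \<rho> / (1 - q)" for k
  proof -
    let ?k = "Suc k"
    have eq: "w i = Dphi (traj h (i + int ?k)) (- (real ?k * h)) (w (i + int ?k)) - (\<Sum>j<?k. Dphi (traj h (i + int j + 1)) (- (real (Suc j) * h)) (r (i + int j)))"
      by (rule bwd_forced) (use rec in blast)
    have n1: "norm (Dphi (traj h (i + int ?k)) (- (real ?k * h)) (w (i + int ?k))) \<le> Cm * q ^ ?k * B"
    proof -
      have "norm (Dphi (traj h (i + int ?k)) (- (real ?k * h)) (w (i + int ?k))) \<le> Cm * lam powr (real ?k * h) * norm (w (i + int ?k))"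
        using Vp_est'[OF traj_in w_in[rule_format], of "- (real ?k * h)"] h by simp
      also have "\<dots> \<le> Cm * q ^ ?k * B" using wb Cm_ge q unfolding powr_nat q_def
        by (intro mult_left_mono) (auto simp: q_def)
      finally show ?thesis .
    qed
    have n2: "norm (\<Sum>j<?k. Dphi (traj h (i + int j + 1)) (- (real (Suc j) * h)) (r (i + int j))) \<le> Cm * \<rho> / (1 - q)"
    proof -
      have "norm (\<Sum>j<?k. Dphi (traj h (i + int j + 1)) (- (real (Suc j) * h)) (r (i + int j)))
          \<le> (\<Sum>j<?k. norm (Dphi (traj h (i + int j + 1)) (- (real (Suc j) * h)) (r (i + int j))))"
        by (rule norm_sum)
      also have "\<dots> \<le> (\<Sum>j<?k. Cm * \<rho> * q ^ j)"
      proof (rule sum_mono)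
        fix j assume "j \<in> {..<?k}"
        have "norm (Dphi (traj h (i + int j + 1)) (- (real (Suc j) * h)) (r (i + int j))) \<le> Cm * lam powr (real (Suc j) * h) * norm (r (i + int j))"
          using Vp_est'[OF traj_in, of "r (i + int j)" h "i + int j + 1" "- (real (Suc j) * h)"] r_in h by simp
        also have "\<dots> \<le> Cm * q ^ Suc j * \<rho>" unfolding powr_nat q_def[symmetric]
          using rb q Cm_ge by (intro mult_left_mono) auto
        also have "\<dots> \<le> Cm * \<rho> * q ^ j" using q Cm_ge r0
          by (simp add: mult_left_mono mult_right_mono power_decreasing algebra_simps mult_le_cancel_left1 mult_le_cancel_right1)
        finally show "norm (Dphi (traj h (i + int j + 1)) (- (real (Suc j) * h)) (r (i + int j))) \<le> Cm * \<rho> * q ^ j" .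
      qed
      also have "\<dots> = Cm * \<rho> * (\<Sum>j<?k. q ^ j)" by (simp only: sum_distrib_left)
      also have "\<dots> \<le> Cm * \<rho> * (1 / (1 - q))" using geom_le[OF q, of ?k] Cm_ge r0 by (intro mult_left_mono) (simp_all del: sum.lessThan_Suc)
      finally show ?thesis by simp
    qed
    have "norm (w i) \<le> norm (Dphi (traj h (i + int ?k)) (- (real ?k * h)) (w (i + int ?k))) + norm (\<Sum>j<?k. Dphi (traj h (i + int j + 1)) (- (real (Suc j) * h)) (r (i + int j)))"
      by (subst eq) (rule norm_triangle_ineq4)
    then show ?thesis using n1 n2 by linarith
  qed
  then show ?thesis using limit_arg[OF q B0] unfolding q_def by blast
qed

end



context setting begin

lemma stable_bound:
  assumes h: "0 < h" and w_in: "\<forall>i. w i \<in> Vm (traj h i)" and r_in: "\<forall>i. r i \<in> Vm (traj h (i + 1))"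
    and rec: "\<forall>i. w (i + 1) = Dphi (traj h i) h (w i) + r i" and rb: "\<forall>i. norm (r i) \<le> \<rho>"
    and wb: "\<forall>i. norm (w i) \<le> B"
  shows "norm (w i) \<le> Cm * \<rho> / (1 - lam powr h)"
proof -
  define q where "q = lam powr h"
  have q: "0 < q" "q < 1" using q_facts[OF h] unfolding q_def by auto
  have B0: "B \<ge> 0" using wb norm_ge_zero order_trans by blast
  have r0: "\<rho> \<ge> 0" using rb norm_ge_zero order_trans by blast
  have "norm (w i) \<le> Cm * q ^ Suc k * B + Cm * \<rho> / (1 - q)" for k
  proof -
    let ?k = "Suc k"
    define i0 where "i0 = i - int ?k"
    have ii: "i0 + int ?k = i" unfolding i0_def by simp
    have eq: "w (i0 + int ?k) = Dphi (traj h i0) (real ?k * h) (w i0) + (\<Sum>j<?k. Dphi (traj h (i0 + int j + 1)) (real (?k - 1 - j) * h) (r (i0 + int j)))"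
      by (rule fwd_forced) (use rec in blast)
    have n1: "norm (Dphi (traj h i0) (real ?k * h) (w i0)) \<le> Cm * q ^ ?k * B"
    proof -
      have "norm (Dphi (traj h i0) (real ?k * h) (w i0)) \<le> Cm * lam powr (real ?k * h) * norm (w i0)"
        using Vm_est'[OF traj_in w_in[rule_format], of "real ?k * h"] h by simp
      also have "\<dots> \<le> Cm * q ^ ?k * B" using wb Cm_ge q unfolding powr_nat q_def
        by (intro mult_left_mono) (auto simp: q_def)
      finally show ?thesis .
    qed
    have n2: "norm (\<Sum>j<?k. Dphi (traj h (i0 + int j + 1)) (real (?k - 1 - j) * h) (r (i0 + int j))) \<le> Cm * \<rho> / (1 - q)"
    proof -
      have "norm (\<Sum>j<?k. Dphi (traj h (i0 + int j + 1)) (real (?k - 1 - j) * h) (r (i0 + int j)))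
          \<le> (\<Sum>j<?k. norm (Dphi (traj h (i0 + int j + 1)) (real (?k - 1 - j) * h) (r (i0 + int j))))"
        by (rule norm_sum)
      also have "\<dots> \<le> (\<Sum>j<?k. Cm * \<rho> * q ^ (?k - Suc j))"
      proof (rule sum_mono)
        fix j assume "j \<in> {..<?k}"
        have "norm (Dphi (traj h (i0 + int j + 1)) (real (?k - 1 - j) * h) (r (i0 + int j))) \<le> Cm * lam powr (real (?k - 1 - j) * h) * norm (r (i0 + int j))"
          using Vm_est'[OF traj_in, of "r (i0 + int j)" h "i0 + int j + 1" "real (?k - 1 - j) * h"] r_in h by simp
        also have "\<dots> \<le> Cm * q ^ (?k - 1 - j) * \<rho>" unfolding powr_nat q_def[symmetric]
          using rb q Cm_ge by (intro mult_left_mono) auto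
        also have "\<dots> = Cm * \<rho> * q ^ (?k - Suc j)" by simp
        finally show "norm (Dphi (traj h (i0 + int j + 1)) (real (?k - 1 - j) * h) (r (i0 + int j))) \<le> Cm * \<rho> * q ^ (?k - Suc j)" .
      qed
      also have "\<dots> = Cm * \<rho> * (\<Sum>j<?k. q ^ (?k - Suc j))" by (simp only: sum_distrib_left)
      also have "(\<Sum>j<?k. q ^ (?k - Suc j)) = (\<Sum>j<?k. q ^ j)" by (rule sum.nat_diff_reindex)
      also have "Cm * \<rho> * (\<Sum>j<?k. q ^ j) \<le> Cm * \<rho> * (1 / (1 - q))"
        using geom_le[OF q, of ?k] Cm_ge r0 by (intro mult_left_mono) (simp_all del: sum.lessThan_Suc)
      finally show ?thesis by simp
    qed
    have "norm (w i) \<le> norm (Dphi (traj h i0) (real ?k * h) (w i0)) + norm (\<Sum>j<?k. Dphi (traj h (i0 + int j + 1)) (real (?k - 1 - j) * h) (r (i0 + int j)))"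
      unfolding ii[symmetric] eq by (rule norm_triangle_ineq)
    then show ?thesis using n1 n2 by linarith
  qed
  then show ?thesis using limit_arg[OF q B0] unfolding q_def by blast
qed

end



context setting begin

definition "Ks = (SOME Ks. Ks > 0 \<and> (\<forall>u\<in>Lambda. \<forall>h\<in>{0..1}. norm (dsphi u h) \<le> Ks * h))"
lemma Ks: "Ks > 0 \<and> (\<forall>u\<in>Lambda. \<forall>h\<in>{0..1}. norm (dsphi u h) \<le> Ks * h)"
  unfolding Ks_def using dsphi_bound by (rule someI_ex)

definition "Kz = (SOME Kz. Kz > 0 \<and> (\<forall>w\<in>Lambda. \<forall>x. \<exists>c. Pz w x = c *\<^sub>R F w \<and> \<bar>c\<bar> \<le> Kz * norm x))"
lemma Kz: "Kz > 0 \<and> (\<forall>w\<in>Lambda. \<forall>x. \<exists>c. Pz w x = c *\<^sub>R F w \<and> \<bar>c\<bar> \<le> Kz * norm x)"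
  unfolding Kz_def using Pz_coef by (rule someI_ex)

definition "K1 = (SOME K1. K1 > 0 \<and> (\<forall>u\<in>Lambda. \<forall>t\<in>{-1..1}. \<forall>v. norm (Dphi u t v) \<le> K1 * norm v))"
lemma K1: "K1 > 0 \<and> (\<forall>u\<in>Lambda. \<forall>t\<in>{-1..1}. \<forall>v. norm (Dphi u t v) \<le> K1 * norm v)"
  unfolding K1_def using Dphi_bound by (rule someI_ex)

definition "Jb = (SOME Jb. Jb > 0 \<and> (\<forall>u\<in>Lambda. \<forall>v. \<bar>DJ u 0 v\<bar> \<le> Jb * norm v))"
lemma Jb: "Jb > 0 \<and> (\<forall>u\<in>Lambda. \<forall>v. \<bar>DJ u 0 v\<bar> \<le> Jb * norm v)"
  unfolding Jb_def using DJ_bound by (rule someI_ex)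

definition "ell = - ln lam"
lemma ell_pos: "ell > 0" unfolding ell_def using lam by simp

lemma hq:
  assumes h: "0 < h" "h * ell \<le> 1"
  shows "h / (1 - lam powr h) \<le> 2 / ell"
proof -
  define x where "x = h * ell"
  have x: "0 < x" "x \<le> 1" using h ell_pos unfolding x_def by auto
  have q: "lam powr h = exp (- x)" unfolding x_def ell_def powr_def using lam by (simp add: algebra_simps)
  have "1 + x \<le> exp x" by (rule exp_ge_add_one_self)
  then have "exp (- x) \<le> 1 / (1 + x)" using x by (simp add: exp_minus field_simps)
  then have "1 - exp (- x) \<ge> x / (1 + x)" using x by (simp add: field_simps)
  moreover have "x / (1 + x) \<ge> x / 2" using x by (intro divide_left_mono) auto
  ultimately have l: "1 - lam powr h \<ge> x / 2" unfolding q by linarith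
  have "h / (1 - lam powr h) \<le> h / (x / 2)"
    using l x h by (intro divide_left_mono) auto
  also have "\<dots> = 2 / ell" unfolding x_def using h ell_pos by (simp add: field_simps)
  finally show ?thesis .
qed

definition "Vb = Cm * Pb * Ks * (2 / ell)"

lemma Vb_pos: "Vb > 0" unfolding Vb_def using Cm_ge Pb Ks ell_pos by simp

lemma vinf_hyp_bound:
  assumes h: "0 < h" "h \<le> 1" "h * ell \<le> 1" and sd: "shadowing_direction phi h (traj h) vinf etainf"
  shows "norm (Pp (traj h i) (vinf i)) \<le> Vb \<and> norm (Pm (traj h i) (vinf i)) \<le> Vb"
proof -
  obtain B where B: "\<forall>i. norm (vinf i) \<le> B" using shadow_bounded[OF sd] by blast
  have step: "Pp (traj h (i + 1)) (vinf (i + 1)) = Dphi (traj h i) h (Pp (traj h i) (vinf i)) + Pp (traj h (i + 1)) (dsphi (traj h i) h) \<and>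
              Pm (traj h (i + 1)) (vinf (i + 1)) = Dphi (traj h i) h (Pm (traj h i) (vinf i)) + Pm (traj h (i + 1)) (dsphi (traj h i) h)" for i
  proof -
    have r: "vinf (i + 1) = Dphi (traj h i) h (vinf i) + dsphi (traj h i) h + (h * etainf i) *\<^sub>R F (phi 0 (traj h i) h)"
      using shadow_rec[OF sd, of i] traj_step by simp
    show ?thesis using proj_step[OF traj_in r] by (simp only: traj_step[symmetric])
  qed
  have rb: "norm (Pp (traj h (i + 1)) (dsphi (traj h i) h)) \<le> Pb * Ks * h \<and> norm (Pm (traj h (i + 1)) (dsphi (traj h i) h)) \<le> Pb * Ks * h" for i
  proof -
    have d: "norm (dsphi (traj h i) h) \<le> Ks * h" using Ks traj_in h by auto
    have "Pb * norm (dsphi (traj h i) h) \<le> Pb * (Ks * h)" using d Pb by (intro mult_left_mono) auto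
    then show ?thesis using Pp_bound[OF traj_in] Pm_bound[OF traj_in] by (simp add: mult.assoc) (meson order_trans)
  qed
  have wb: "norm (Pp (traj h i) (vinf i)) \<le> Pb * B \<and> norm (Pm (traj h i) (vinf i)) \<le> Pb * B" for i
  proof -
    have "Pb * norm (vinf i) \<le> Pb * B" using B Pb by (intro mult_left_mono) auto
    then show ?thesis using Pp_bound[OF traj_in] Pm_bound[OF traj_in] by (meson order_trans)
  qed
  have fin: "Cm * (Pb * Ks * h) / (1 - lam powr h) \<le> Vb"
  proof -
    have "Cm * (Pb * Ks * h) / (1 - lam powr h) = Cm * Pb * Ks * (h / (1 - lam powr h))" by simp
    also have "\<dots> \<le> Cm * Pb * Ks * (2 / ell)" using hq[OF h(1,3)] Cm_ge Pb Ks by (intro mult_left_mono) auto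
    finally show ?thesis unfolding Vb_def .
  qed
  have "norm (Pp (traj h i) (vinf i)) \<le> Cm * (Pb * Ks * h) / (1 - lam powr h)"
    by (rule unstable_bound[OF h(1), where r="\<lambda>i. Pp (traj h (i + 1)) (dsphi (traj h i) h)" and B="Pb * B"])
       (use P_in[OF traj_in] step rb wb in auto)
  moreover have "norm (Pm (traj h i) (vinf i)) \<le> Cm * (Pb * Ks * h) / (1 - lam powr h)"
    by (rule stable_bound[OF h(1), where r="\<lambda>i. Pm (traj h (i + 1)) (dsphi (traj h i) h)" and B="Pb * B"])
       (use P_in[OF traj_in] step rb wb in auto)
  ultimately show ?thesis using fin by linarith
qed

end



lemma pigeon:
  fixes a :: "'i \<Rightarrow> real"
  assumes "finite I" "I \<noteq> {}" "(\<Sum>i\<in>I. a i) \<le> S"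
  shows "\<exists>i\<in>I. a i * real (card I) \<le> S"
proof (rule ccontr)
  assume "\<not> (\<exists>i\<in>I. a i * real (card I) \<le> S)"
  then have lt: "\<forall>i\<in>I. S < a i * real (card I)" by auto
  have "(\<Sum>i\<in>I. S) < (\<Sum>i\<in>I. a i * real (card I))"
    using assms(1,2) lt by (intro sum_strict_mono) auto
  then have "real (card I) * S < real (card I) * (\<Sum>i\<in>I. a i)"
    by (simp add: sum_distrib_right mult.commute)
  moreover have "card I > 0" using assms(1,2) by (simp add: card_gt_0_iff)
  ultimately have "S < (\<Sum>i\<in>I. a i)" by simp
  then show False using assms(3) by simp
qed

lemma sum_int_geo1:
  fixes q :: real and N :: int
  assumes "N \<ge> 0"
  shows "(\<Sum>i\<in>{1..N}. q ^ nat (i - 1)) = (\<Sum>k<nat N. q ^ k)"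
proof -
  have bij: "bij_betw (\<lambda>k. int k + 1) {..<nat N} {1..N}"
    unfolding bij_betw_def inj_on_def using assms
  proof (auto simp: image_iff)
    fix x assume "1 \<le> x" "x \<le> N"
    then show "\<exists>xa\<in>{..<nat N}. x = int xa + 1" by (intro bexI[of _ "nat (x - 1)"]) auto
  qed
  show ?thesis using sum.reindex_bij_betw[OF bij, of "\<lambda>i. q ^ nat (i - 1)"] by simp
qed

lemma sum_int_geo2:
  fixes q :: real and N :: int
  assumes "N \<ge> 0"
  shows "(\<Sum>i\<in>{1..N}. q ^ nat (N - i)) = (\<Sum>k<nat N. q ^ k)"
proof -
  have bij: "bij_betw (\<lambda>k. N - int k) {..<nat N} {1..N}"
    unfolding bij_betw_def inj_on_def using assms
  proof (auto simp: image_iff)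
    fix x assume "1 \<le> x" "x \<le> N"
    then show "\<exists>xa\<in>{..<nat N}. x = N - int xa" by (intro bexI[of _ "nat (N - x)"]) auto
  qed
  show ?thesis using sum.reindex_bij_betw[OF bij, of "\<lambda>i. q ^ nat (N - i)"] by simp
qed

context setting begin

lemma vinf_step:
  assumes sd: "shadowing_direction phi h (traj h) vinf etainf"
  shows "Pp (traj h (i + 1)) (vinf (i + 1)) = Dphi (traj h i) h (Pp (traj h i) (vinf i)) + Pp (traj h (i + 1)) (dsphi (traj h i) h) \<and>
         Pm (traj h (i + 1)) (vinf (i + 1)) = Dphi (traj h i) h (Pm (traj h i) (vinf i)) + Pm (traj h (i + 1)) (dsphi (traj h i) h)"
proof -
  have r: "vinf (i + 1) = Dphi (traj h i) h (vinf i) + dsphi (traj h i) h + (h * etainf i) *\<^sub>R F (phi 0 (traj h i) h)"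
    using shadow_rec[OF sd, of i] traj_step by simp
  show ?thesis using proj_step[OF traj_in r] by (simp only: traj_step[symmetric])
qed

lemma P_lin_apply:
  assumes "u \<in> Lambda"
  shows "Pp u (x - y) = Pp u x - Pp u y \<and> Pm u (x - y) = Pm u x - Pm u y \<and> Pp u 0 = 0 \<and> Pm u 0 = 0"
  using P_linear[OF assms] by (simp add: linear_diff linear_0)

end



context setting begin

definition "M0 = (2 * Vb)\<^sup>2 + alpha * (Kz * Ks)\<^sup>2 + 1"
lemma M0_pos: "M0 > 0" unfolding M0_def using alpha_pos by (simp add: add_nonneg_pos)

lemma obj_bound:
  assumes h: "0 < h" "h \<le> 1" "h * ell \<le> 1"
    and sol: "lss_solution phi f Dphi dsphi alpha h (traj h) N v eta"
    and sd: "shadowing_direction phi h (traj h) vinf etainf" and N0: "N \<ge> 0"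
  shows "(\<Sum>i\<in>{1..N}. (norm (v i))\<^sup>2) \<le> real_of_int N * M0"
proof -
  let ?u = "traj h"
  have "\<forall>i. \<exists>c. Pz (?u (i + 1)) (dsphi (?u i) h) = c *\<^sub>R F (?u (i + 1)) \<and> \<bar>c\<bar> \<le> Kz * norm (dsphi (?u i) h)"
    using Kz traj_in by blast
  then obtain cf where cf: "\<And>i. Pz (?u (i + 1)) (dsphi (?u i) h) = cf i *\<^sub>R F (?u (i + 1)) \<and> \<bar>cf i\<bar> \<le> Kz * norm (dsphi (?u i) h)"
    by metis
  define v' where "v' i = Pp (?u i) (vinf i) + Pm (?u i) (vinf i)" for i
  define eta' where "eta' i = - cf i / h" for i
  have feas: "lss_feasible phi f Dphi dsphi h ?u N v' eta'"
    unfolding lss_feasible_def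
  proof (intro allI impI)
    fix i assume "1 \<le> i \<and> i < N"
    have st: "Pp (?u (i + 1)) (vinf (i + 1)) = Dphi (?u i) h (Pp (?u i) (vinf i)) + Pp (?u (i + 1)) (dsphi (?u i) h)"
             "Pm (?u (i + 1)) (vinf (i + 1)) = Dphi (?u i) h (Pm (?u i) (vinf i)) + Pm (?u (i + 1)) (dsphi (?u i) h)"
      using vinf_step[OF sd, of i] by auto
    have ds: "dsphi (?u i) h = Pp (?u (i + 1)) (dsphi (?u i) h) + Pm (?u (i + 1)) (dsphi (?u i) h) + cf i *\<^sub>R F (?u (i + 1))"
      using P_in[OF traj_in, of h "i + 1" "dsphi (?u i) h"] cf[of i] by simp
    have fe: "f (phi 0 (?u i) h) 0 = F (?u (i + 1))" by (simp add: F_def traj_step)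
    have he: "(h * eta' i) *\<^sub>R F (?u (i + 1)) = - (cf i *\<^sub>R F (?u (i + 1)))" unfolding eta'_def using h by simp
    show "v' (i + 1) = Dphi (?u i) h (v' i) + dsphi (?u i) h + (h * eta' i) *\<^sub>R f (phi 0 (?u i) h) 0"
      unfolding fe he v'_def st blinfun.add_right by (subst ds) (simp add: algebra_simps)
  qed
  have "lss_objective alpha N v eta \<le> lss_objective alpha N v' eta'"
    using sol feas unfolding lss_solution_def by blast
  moreover have "(\<Sum>i\<in>{1..N}. (norm (v i))\<^sup>2) \<le> lss_objective alpha N v eta"
    unfolding lss_objective_def using alpha_pos by (intro sum_mono) simp
  moreover have "lss_objective alpha N v' eta' \<le> real_of_int N * M0"
  proof -
    have "lss_objective alpha N v' eta' \<le> (\<Sum>i\<in>{1..N}. M0)"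
      unfolding lss_objective_def
    proof (rule sum_mono)
      fix i assume "i \<in> {1..N}"
      have a: "norm (v' i) \<le> 2 * Vb"
        using vinf_hyp_bound[OF h sd, of i] unfolding v'_def using norm_triangle_ineq by (smt (verit))
      have b: "\<bar>eta' i\<bar> \<le> Kz * Ks"
      proof -
        have "\<bar>cf i\<bar> \<le> Kz * norm (dsphi (?u i) h)" using cf by blast
        also have "\<dots> \<le> Kz * (Ks * h)" using Ks Kz traj_in h by (intro mult_left_mono) auto
        finally have "\<bar>cf i\<bar> / h \<le> Kz * Ks" using h by (simp add: divide_le_eq)
        then show ?thesis unfolding eta'_def using h by simp
      qed
      have "(norm (v' i))\<^sup>2 \<le> (2 * Vb)\<^sup>2" using a by (intro power_mono) auto
      moreover have "alpha * (eta' i)\<^sup>2 \<le> alpha * (Kz * Ks)\<^sup>2"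
        using b alpha_pos by (intro mult_left_mono) (auto simp: abs_le_square_iff[symmetric] power2_abs)
      ultimately show "(norm (v' i))\<^sup>2 + alpha * (eta' i)\<^sup>2 \<le> M0" unfolding M0_def by linarith
    qed
    also have "\<dots> \<le> real_of_int N * M0"
      using M0_pos N0 by simp
    finally show ?thesis .
  qed
  ultimately show ?thesis by linarith
qed

end



context setting begin

lemma e_rec:
  assumes sol: "lss_solution phi f Dphi dsphi alpha h (traj h) N v eta"
    and sd: "shadowing_direction phi h (traj h) vinf etainf" and i: "1 \<le> i" "i < N"
  shows "v (i + 1) - vinf (i + 1) = Dphi (traj h i) h (v i - vinf i) + 0 + (h * (eta i - etainf i)) *\<^sub>R F (phi 0 (traj h i) h)"
proof -
  have a: "v (i + 1) = Dphi (traj h i) h (v i) + dsphi (traj h i) h + (h * eta i) *\<^sub>R F (phi 0 (traj h i) h)"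
    using sol i unfolding lss_solution_def lss_feasible_def F_def by blast
  have b: "vinf (i + 1) = Dphi (traj h i) h (vinf i) + dsphi (traj h i) h + (h * etainf i) *\<^sub>R F (phi 0 (traj h i) h)"
    using shadow_rec[OF sd, of i] traj_step by simp
  show ?thesis unfolding a b by (simp add: blinfun.diff_right algebra_simps)
qed

lemma hyp_rec:
  assumes sol: "lss_solution phi f Dphi dsphi alpha h (traj h) N v eta"
    and sd: "shadowing_direction phi h (traj h) vinf etainf"
    and dec: "\<forall>i\<in>{1..N}. v i - vinf i = ep i + em i + ez i \<and> ep i \<in> Vp (traj h i) \<and> em i \<in> Vm (traj h i) \<and> ez i \<in> V0 f (traj h i)"
    and i: "1 \<le> i" "i < N"
  shows "ep (i + 1) = Dphi (traj h i) h (ep i) \<and> em (i + 1) = Dphi (traj h i) h (em i)"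
proof -
  have pi: "\<And>j. j \<in> {1..N} \<Longrightarrow> ep j = Pp (traj h j) (v j - vinf j) \<and> em j = Pm (traj h j) (v j - vinf j)"
    using P_ident[OF traj_in] dec by metis
  note st = proj_step[OF traj_in e_rec[OF sol sd i]]
  have z: "Pp (phi 0 (traj h i) h) 0 = 0" "Pm (phi 0 (traj h i) h) 0 = 0"
    using P_lin_apply[OF traj_in[of h "i + 1"]] traj_step by auto
  have "Pp (traj h (i + 1)) (v (i + 1) - vinf (i + 1)) = Dphi (traj h i) h (Pp (traj h i) (v i - vinf i))
      \<and> Pm (traj h (i + 1)) (v (i + 1) - vinf (i + 1)) = Dphi (traj h i) h (Pm (traj h i) (v i - vinf i))"
    using st z by (simp add: traj_step)
  moreover have "i \<in> {1..N}" "i + 1 \<in> {1..N}" using i by auto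
  ultimately show ?thesis using pi by metis
qed

end



context setting begin

lemma transport:
  assumes sol: "lss_solution phi f Dphi dsphi alpha h (traj h) N v eta"
    and sd: "shadowing_direction phi h (traj h) vinf etainf"
    and dec: "\<forall>i\<in>{1..N}. v i - vinf i = ep i + em i + ez i \<and> ep i \<in> Vp (traj h i) \<and> em i \<in> Vm (traj h i) \<and> ez i \<in> V0 f (traj h i)"
    and i: "1 \<le> i" "i \<le> N"
  shows "ep N = Dphi (traj h i) (real (nat (N - i)) * h) (ep i)
       \<and> ep i = Dphi (traj h N) (- (real (nat (N - i)) * h)) (ep N)
       \<and> em i = Dphi (traj h 1) (real (nat (i - 1)) * h) (em 1)
       \<and> em 1 = Dphi (traj h i) (- (real (nat (i - 1)) * h)) (em i)"
proof -
  have r: "\<And>j. 1 \<le> j \<Longrightarrow> j < N \<Longrightarrow> ep (j + 1) = Dphi (traj h j) h (ep j) \<and> em (j + 1) = Dphi (traj h j) h (em j)"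
    using hyp_rec[OF sol sd dec] by blast
  have k1: "i + int (nat (N - i)) = N" using i by simp
  have a: "ep (i + int (nat (N - i))) = Dphi (traj h i) (real (nat (N - i)) * h) (ep i)"
    by (rule fwd_zero) (use r i in auto)
  then have A: "ep N = Dphi (traj h i) (real (nat (N - i)) * h) (ep i)" unfolding k1 .
  have B: "ep i = Dphi (traj h N) (- (real (nat (N - i)) * h)) (ep N)"
  proof -
    define t where "t = real (nat (N - i)) * h"
    have inv: "Dphi (phi 0 (traj h i) t) (- t) (Dphi (traj h i) t (ep i)) = ep i" by (rule Dphi_inv)
    have ph: "phi 0 (traj h i) t = traj h N" using traj_shift[of h i "nat (N - i)"] unfolding k1 t_def .
    show ?thesis using inv A unfolding ph t_def[symmetric] by simp
  qed
  have k2: "1 + int (nat (i - 1)) = i" using i by simp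
  have c: "em (1 + int (nat (i - 1))) = Dphi (traj h 1) (real (nat (i - 1)) * h) (em 1)"
    by (rule fwd_zero) (use r i in auto)
  then have C: "em i = Dphi (traj h 1) (real (nat (i - 1)) * h) (em 1)" unfolding k2 .
  have D: "em 1 = Dphi (traj h i) (- (real (nat (i - 1)) * h)) (em i)"
  proof -
    define t where "t = real (nat (i - 1)) * h"
    have inv: "Dphi (phi 0 (traj h 1) t) (- t) (Dphi (traj h 1) t (em 1)) = em 1" by (rule Dphi_inv)
    have ph: "phi 0 (traj h 1) t = traj h i" using traj_shift[of h 1 "nat (i - 1)"] unfolding k2 t_def .
    show ?thesis using inv C unfolding ph t_def[symmetric] by simp
  qed
  show ?thesis using A B C D by blast
qed

end



context setting begin

definition "Eb = K1 * (Pb * sqrt M0 + Vb)"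

lemma Eb_pos: "Eb > 0" unfolding Eb_def using conjunct1[OF K1] conjunct1[OF Pb] M0_pos Vb_pos
  by (intro mult_pos_pos add_pos_pos) auto

lemma endpoint_bounds:
  assumes h: "0 < h" "h \<le> 1" "h * ell \<le> 1" and T: "T \<ge> 3" and Ndef: "N = \<lfloor>T / h\<rfloor>"
    and sol: "lss_solution phi f Dphi dsphi alpha h (traj h) N v eta"
    and sd: "shadowing_direction phi h (traj h) vinf etainf"
    and dec: "\<forall>i\<in>{1..N}. v i - vinf i = ep i + em i + ez i \<and> ep i \<in> Vp (traj h i) \<and> em i \<in> Vm (traj h i) \<and> ez i \<in> V0 f (traj h i)"
  shows "norm (ep N) \<le> Eb * sqrt T \<and> norm (em 1) \<le> Eb * sqrt T"
proof -
  define M where "M = nat \<lfloor>1 / h\<rfloor>"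
  have hinv: "1 / h \<ge> 1" using h by simp
  have fl: "\<lfloor>1 / h\<rfloor> \<ge> 1" using hinv by simp
  have Mr: "real M = real_of_int \<lfloor>1 / h\<rfloor>" unfolding M_def by (rule of_nat_nat) (use fl in linarith)
  have M1: "real M \<le> 1 / h" unfolding Mr by simp
  have M2: "1 / h < real M + 1" unfolding Mr by linarith
  have Mh: "real M * h \<le> 1" using M1 h by (simp add: field_simps)
  have N1: "real_of_int N \<le> T / h" unfolding Ndef by simp
  have N2: "T / h < real_of_int N + 1" unfolding Ndef by linarith
  have "T / h \<ge> 3 / h" using T h by (simp add: divide_right_mono)
  moreover have "2 / h \<ge> 2" using h by (simp add: field_simps)
  moreover have "3 / h = 1 / h + 2 / h" by (simp add: field_simps)
  ultimately have "real_of_int N > real M + 1"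
    using N2 M1 by linarith
  then have NM: "N \<ge> int M + 2" by linarith
  have N0: "N \<ge> 0" using NM by simp
  have sv: "(\<Sum>i\<in>{1..N}. (norm (v i))\<^sup>2) \<le> real_of_int N * M0"
    by (rule obj_bound[OF h sol sd N0])
  have sqT: "sqrt T \<ge> 1" using T by simp
  have pick: "\<exists>i\<in>I. norm (v i) \<le> sqrt T * sqrt M0" if I: "I \<subseteq> {1..N}" "I \<noteq> {}" "card I = M + 1" for I
  proof -
    have fI: "finite I" using I(1) finite_subset by blast
    have "(\<Sum>i\<in>I. (norm (v i))\<^sup>2) \<le> (\<Sum>i\<in>{1..N}. (norm (v i))\<^sup>2)"
      by (rule sum_mono2) (use I in auto)
    also have "\<dots> \<le> real_of_int N * M0" by (rule sv)
    finally obtain i where i: "i \<in> I" "(norm (v i))\<^sup>2 * real (card I) \<le> real_of_int N * M0"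
      using pigeon[OF fI I(2)] by blast
    have "(norm (v i))\<^sup>2 * (1 / h) \<le> (norm (v i))\<^sup>2 * real (card I)"
      using I(3) M2 by (intro mult_left_mono) auto
    also have "\<dots> \<le> real_of_int N * M0" by (rule i(2))
    also have "\<dots> \<le> (T / h) * M0" using N1 M0_pos by (intro mult_right_mono) auto
    finally have "(norm (v i))\<^sup>2 \<le> T * M0" using h by (simp add: field_simps)
    then have "norm (v i) \<le> sqrt (T * M0)" by (rule real_le_rsqrt)
    then show ?thesis using i(1) by (auto simp: real_sqrt_mult)
  qed
  have epi: "norm (ep i) \<le> Pb * (sqrt T * sqrt M0) + Vb \<and> norm (em i) \<le> Pb * (sqrt T * sqrt M0) + Vb"
    if i: "i \<in> {1..N}" "norm (v i) \<le> sqrt T * sqrt M0" for i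
  proof -
    have m: "ep i \<in> Vp (traj h i)" "em i \<in> Vm (traj h i)" "ez i \<in> V0 f (traj h i)" "v i - vinf i = ep i + em i + ez i"
      using dec i(1) by auto
    have pid: "Pp (traj h i) (v i - vinf i) = ep i \<and> Pm (traj h i) (v i - vinf i) = em i"
      using P_ident[OF traj_in m(1-3) m(4)] by simp
    have lin: "Pp (traj h i) (v i - vinf i) = Pp (traj h i) (v i) - Pp (traj h i) (vinf i) \<and> Pm (traj h i) (v i - vinf i) = Pm (traj h i) (v i) - Pm (traj h i) (vinf i)"
      using P_lin_apply[OF traj_in[of h i]] by simp
    have pb: "Pb * norm (v i) \<le> Pb * (sqrt T * sqrt M0)" using i(2) Pb by (intro mult_left_mono) auto
    have a1: "norm (Pp (traj h i) (v i)) \<le> Pb * (sqrt T * sqrt M0)"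
      using Pp_bound[OF traj_in[of h i], of "v i"] pb by linarith
    have a2: "norm (Pm (traj h i) (v i)) \<le> Pb * (sqrt T * sqrt M0)"
      using Pm_bound[OF traj_in[of h i], of "v i"] pb by linarith
    have b: "norm (Pp (traj h i) (vinf i)) \<le> Vb" "norm (Pm (traj h i) (vinf i)) \<le> Vb"
      using vinf_hyp_bound[OF h sd, of i] by auto
    have c1: "norm (ep i) \<le> norm (Pp (traj h i) (v i)) + norm (Pp (traj h i) (vinf i))"
      using pid lin norm_triangle_ineq4[of "Pp (traj h i) (v i)" "Pp (traj h i) (vinf i)"] by simp
    have c2: "norm (em i) \<le> norm (Pm (traj h i) (v i)) + norm (Pm (traj h i) (vinf i))"
      using pid lin norm_triangle_ineq4[of "Pm (traj h i) (v i)" "Pm (traj h i) (vinf i)"] by simp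
    show ?thesis using a1 a2 b c1 c2 by linarith
  qed
  have fin: "K1 * (Pb * (sqrt T * sqrt M0) + Vb) \<le> Eb * sqrt T"
  proof -
    have "Vb \<le> Vb * sqrt T" using Vb_pos sqT by (simp add: mult_le_cancel_left1)
    then have "Pb * (sqrt T * sqrt M0) + Vb \<le> (Pb * sqrt M0 + Vb) * sqrt T" by (simp add: algebra_simps)
    then show ?thesis unfolding Eb_def using K1 by (simp add: mult_left_mono mult.assoc)
  qed
  have I1: "{N - int M..N} \<subseteq> {1..N}" "{N - int M..N} \<noteq> {}" "card {N - int M..N} = M + 1"
    using NM by auto
  obtain i0 where i0: "i0 \<in> {N - int M..N}" "norm (v i0) \<le> sqrt T * sqrt M0" using pick[OF I1] by blast
  have i0': "i0 \<in> {1..N}" using i0 I1 by auto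
  note tr0 = transport[OF sol sd dec, of i0]
  have t0: "real (nat (N - i0)) * h \<in> {-1..1}"
  proof -
    have "nat (N - i0) \<le> M" using i0 by auto
    then have a: "real (nat (N - i0)) * h \<le> real M * h" using h by (intro mult_right_mono) auto
    have b: "0 \<le> real (nat (N - i0)) * h" using h by simp
    show ?thesis unfolding atLeastAtMost_iff using a b Mh by linarith
  qed
  have "norm (ep N) \<le> K1 * norm (ep i0)"
  proof -
    have c: "1 \<le> i0" "i0 \<le> N" using i0' by auto
    have eq: "ep N = Dphi (traj h i0) (real (nat (N - i0)) * h) (ep i0)" using tr0[OF c] by blast
    have "norm (Dphi (traj h i0) (real (nat (N - i0)) * h) (ep i0)) \<le> K1 * norm (ep i0)"
      using K1 traj_in[of h i0] t0 by blast
    then show ?thesis unfolding eq[symmetric] .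
  qed
  also have "\<dots> \<le> K1 * (Pb * (sqrt T * sqrt M0) + Vb)" using epi[OF i0' i0(2)] K1 by (intro mult_left_mono) auto
  finally have A: "norm (ep N) \<le> Eb * sqrt T" using fin by linarith
  have I2: "{1..1 + int M} \<subseteq> {1..N}" "{1..1 + int M} \<noteq> {}" "card {1..1 + int M} = M + 1"
    using NM by auto
  obtain i1 where i1: "i1 \<in> {1..1 + int M}" "norm (v i1) \<le> sqrt T * sqrt M0" using pick[OF I2] by blast
  have i1': "i1 \<in> {1..N}" using i1 I2 by auto
  note tr1 = transport[OF sol sd dec, of i1]
  have t1: "- (real (nat (i1 - 1)) * h) \<in> {-1..1}"
  proof -
    have "nat (i1 - 1) \<le> M" using i1 by auto
    then have a: "real (nat (i1 - 1)) * h \<le> real M * h" using h by (intro mult_right_mono) auto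
    have b: "0 \<le> real (nat (i1 - 1)) * h" using h by simp
    show ?thesis unfolding atLeastAtMost_iff using a b Mh by linarith
  qed
  have "norm (em 1) \<le> K1 * norm (em i1)"
  proof -
    have c: "1 \<le> i1" "i1 \<le> N" using i1' by auto
    have eq: "em 1 = Dphi (traj h i1) (- (real (nat (i1 - 1)) * h)) (em i1)" using tr1[OF c] by blast
    have "norm (Dphi (traj h i1) (- (real (nat (i1 - 1)) * h)) (em i1)) \<le> K1 * norm (em i1)"
      using K1 traj_in[of h i1] t1 by blast
    then show ?thesis unfolding eq[symmetric] .
  qed
  also have "\<dots> \<le> K1 * (Pb * (sqrt T * sqrt M0) + Vb)" using epi[OF i1' i1(2)] K1 by (intro mult_left_mono) auto
  finally have B: "norm (em 1) \<le> Eb * sqrt T" using fin by linarith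
  show ?thesis using A B by blast
qed

end



context setting begin

lemma main_fixed:
  assumes h: "0 < h" "h \<le> 1" "h * ell \<le> 1" and T: "T \<ge> 3" and Ndef: "N = \<lfloor>T / h\<rfloor>"
    and sol: "lss_solution phi f Dphi dsphi alpha h (traj h) N v eta"
    and sd: "shadowing_direction phi h (traj h) vinf etainf"
    and dec: "\<forall>i\<in>{1..N}. v i - vinf i = ep i + em i + ez i \<and> ep i \<in> Vp (traj h i) \<and> em i \<in> Vm (traj h i) \<and> ez i \<in> V0 f (traj h i)"
    and i: "i \<in> {1..N}"
  shows "norm (ep i) \<le> Cm * Eb * sqrt T * (lam powr h) ^ nat (N - i) \<and> norm (em i) \<le> Cm * Eb * sqrt T * (lam powr h) ^ nat (i - 1)"
proof -
  note eb = endpoint_bounds[OF h T Ndef sol sd dec]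
  have c: "1 \<le> i" "i \<le> N" using i by auto
  note tr = transport[OF sol sd dec c]
  have N1: "N \<in> {1..N}" "1 \<in> {1..N}" using c by auto
  have mN: "ep N \<in> Vp (traj h N)" and m1: "em 1 \<in> Vm (traj h 1)" using dec N1 by auto
  have q0: "0 \<le> lam powr h" by simp
  have "norm (ep i) = norm (Dphi (traj h N) (- (real (nat (N - i)) * h)) (ep N))" using tr by metis
  also have "\<dots> \<le> Cm * lam powr (real (nat (N - i)) * h) * norm (ep N)"
    using Vp_est'[OF traj_in mN, of "- (real (nat (N - i)) * h)"] h by simp
  also have "\<dots> = Cm * (lam powr h) ^ nat (N - i) * norm (ep N)" by (simp only: powr_nat)
  also have "\<dots> \<le> Cm * (lam powr h) ^ nat (N - i) * (Eb * sqrt T)"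
    using eb Cm_ge q0 by (intro mult_left_mono) auto
  finally have A: "norm (ep i) \<le> Cm * Eb * sqrt T * (lam powr h) ^ nat (N - i)" by (simp add: algebra_simps)
  have "norm (em i) = norm (Dphi (traj h 1) (real (nat (i - 1)) * h) (em 1))" using tr by metis
  also have "\<dots> \<le> Cm * lam powr (real (nat (i - 1)) * h) * norm (em 1)"
    using Vm_est'[OF traj_in m1, of "real (nat (i - 1)) * h"] h by simp
  also have "\<dots> = Cm * (lam powr h) ^ nat (i - 1) * norm (em 1)" by (simp only: powr_nat)
  also have "\<dots> \<le> Cm * (lam powr h) ^ nat (i - 1) * (Eb * sqrt T)"
    using eb Cm_ge q0 by (intro mult_left_mono) auto
  finally have B: "norm (em i) \<le> Cm * Eb * sqrt T * (lam powr h) ^ nat (i - 1)" by (simp add: algebra_simps)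
  show ?thesis using A B by blast
qed

end



context setting begin

lemma sum_J_bound:
  assumes h: "0 < h" "h \<le> 1" "h * ell \<le> 1" and T: "T \<ge> 3" and Ndef: "N = \<lfloor>T / h\<rfloor>"
    and sol: "lss_solution phi f Dphi dsphi alpha h (traj h) N v eta"
    and sd: "shadowing_direction phi h (traj h) vinf etainf"
    and dec: "\<forall>i\<in>{1..N}. v i - vinf i = ep i + em i + ez i \<and> ep i \<in> Vp (traj h i) \<and> em i \<in> Vm (traj h i) \<and> ez i \<in> V0 f (traj h i)"
  shows "\<bar>h / T * (\<Sum>i\<in>{1..N}. DJ (traj h i) 0 (ep i + em i))\<bar> \<le> (4 * Jb * Cm * Eb / ell) / sqrt T"
proof -
  define q where "q = lam powr h"
  have q: "0 < q" "q < 1" using q_facts[OF h(1)] unfolding q_def by auto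
  have T0: "T > 0" using T by simp
  have N0: "N \<ge> 0" unfolding Ndef using T h by simp
  let ?K = "Jb * (Cm * Eb * sqrt T)"
  have "\<bar>\<Sum>i\<in>{1..N}. DJ (traj h i) 0 (ep i + em i)\<bar> \<le> (\<Sum>i\<in>{1..N}. \<bar>DJ (traj h i) 0 (ep i + em i)\<bar>)"
    by (rule sum_abs)
  also have "\<dots> \<le> (\<Sum>i\<in>{1..N}. ?K * (q ^ nat (N - i) + q ^ nat (i - 1)))"
  proof (rule sum_mono)
    fix i assume i: "i \<in> {1..N}"
    have mf: "norm (ep i) \<le> Cm * Eb * sqrt T * q ^ nat (N - i) \<and> norm (em i) \<le> Cm * Eb * sqrt T * q ^ nat (i - 1)"
      using main_fixed[OF h T Ndef sol sd dec i] unfolding q_def .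
    have "\<bar>DJ (traj h i) 0 (ep i + em i)\<bar> \<le> Jb * norm (ep i + em i)" using conjunct2[OF Jb] traj_in[of h i] by blast
    also have "\<dots> \<le> Jb * (norm (ep i) + norm (em i))" using Jb by (intro mult_left_mono norm_triangle_ineq) auto
    also have "\<dots> \<le> Jb * (Cm * Eb * sqrt T * q ^ nat (N - i) + Cm * Eb * sqrt T * q ^ nat (i - 1))"
      using Jb mf by (intro mult_left_mono) auto
    also have "\<dots> = ?K * (q ^ nat (N - i) + q ^ nat (i - 1))" by (simp add: algebra_simps)
    finally show "\<bar>DJ (traj h i) 0 (ep i + em i)\<bar> \<le> ?K * (q ^ nat (N - i) + q ^ nat (i - 1))" .
  qed
  also have "\<dots> = ?K * ((\<Sum>i\<in>{1..N}. q ^ nat (N - i)) + (\<Sum>i\<in>{1..N}. q ^ nat (i - 1)))"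
    by (simp only: sum.distrib[symmetric] sum_distrib_left)
  also have "\<dots> \<le> ?K * (2 / (1 - q))"
  proof -
    have "(\<Sum>i\<in>{1..N}. q ^ nat (N - i)) \<le> 1 / (1 - q)" using sum_int_geo2[OF N0] geom_le[OF q] by simp
    moreover have "(\<Sum>i\<in>{1..N}. q ^ nat (i - 1)) \<le> 1 / (1 - q)" using sum_int_geo1[OF N0] geom_le[OF q] by simp
    ultimately have "(\<Sum>i\<in>{1..N}. q ^ nat (N - i)) + (\<Sum>i\<in>{1..N}. q ^ nat (i - 1)) \<le> 2 / (1 - q)" by simp
    moreover have "?K \<ge> 0" using conjunct1[OF Jb] Cm_ge Eb_pos T0 by simp
    ultimately show ?thesis by (intro mult_left_mono) auto
  qed
  finally have S: "\<bar>\<Sum>i\<in>{1..N}. DJ (traj h i) 0 (ep i + em i)\<bar> \<le> ?K * (2 / (1 - q))" .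
  have "\<bar>h / T * (\<Sum>i\<in>{1..N}. DJ (traj h i) 0 (ep i + em i))\<bar> = h / T * \<bar>\<Sum>i\<in>{1..N}. DJ (traj h i) 0 (ep i + em i)\<bar>"
    using h T0 by (simp add: abs_mult)
  also have "\<dots> \<le> h / T * (?K * (2 / (1 - q)))" using S h T0 by (intro mult_left_mono) auto
  also have "\<dots> = (h / (1 - q)) * (2 * Jb * Cm * Eb) * (sqrt T / T)" by (simp add: field_simps)
  also have "\<dots> \<le> (2 / ell) * (2 * Jb * Cm * Eb) * (sqrt T / T)"
    using hq[OF h(1) h(3)] Jb Cm_ge Eb_pos T0 unfolding q_def by (intro mult_right_mono) auto
  also have "sqrt T / T = 1 / sqrt T"
  proof -
    have ss: "sqrt T * sqrt T = T" using T0 by simp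
    have "sqrt T > 0" using T0 by simp
    have "sqrt T / T = sqrt T / (sqrt T * sqrt T)" by (simp only: ss)
    also have "\<dots> = 1 / sqrt T"
      using \<open>sqrt T > 0\<close> divide_self_if[of "sqrt T"] by (simp only: divide_divide_eq_left[symmetric]) simp
    finally show ?thesis .
  qed
  finally show ?thesis by (simp add: field_simps)
qed

lemma main_loc:
  "\<exists>E A' h0 T0. E > 0 \<and> A' > 0 \<and> h0 > 0 \<and> T0 > 0 \<and>
    (\<forall>h T. 0 < h \<longrightarrow> h < h0 \<longrightarrow> T > T0 \<longrightarrow>
      (let N = \<lfloor>T / h\<rfloor>; u = (\<lambda>i::int. phi 0 u0 (real_of_int i * h)) in
       \<forall>v eta vinf etainf ep em ez.
         lss_solution phi f Dphi dsphi alpha h u N v eta \<longrightarrow>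
         shadowing_direction phi h u vinf etainf \<longrightarrow>
         (\<forall>i\<in>{1..N}. v i - vinf i = ep i + em i + ez i \<and>
                      ep i \<in> Vp (u i) \<and> em i \<in> Vm (u i) \<and> ez i \<in> V0 f (u i)) \<longrightarrow>
         (\<forall>i\<in>{1..N}. norm (ep i) \<le> E * sqrt T \<and> norm (em i) \<le> E * sqrt T) \<and>
         \<bar>h / T * (\<Sum>i\<in>{1..N}. DJ (u i) 0 (ep i + em i))\<bar> \<le> A' / sqrt T))"
proof (intro exI conjI allI impI)
  let ?E = "Cm * Eb + 1" and ?A = "4 * Jb * Cm * Eb / ell + 1" and ?h0 = "min 1 (1 / ell)" and ?T0 = "3::real"
  show "?E > 0" using Cm_ge Eb_pos by (simp add: add_pos_pos)
  show "?A > 0" using Jb Cm_ge Eb_pos ell_pos by (simp add: add_pos_pos)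
  show "?h0 > 0" using ell_pos by simp
  show "?T0 > 0" by simp
  fix h T :: real assume h0: "0 < h" and hh: "h < ?h0" and TT: "T > ?T0"
  have h: "0 < h" "h \<le> 1" "h * ell \<le> 1" using h0 hh ell_pos by (auto simp: field_simps)
  have T: "T \<ge> 3" using TT by simp
  have ue: "(\<lambda>i::int. phi 0 u0 (real_of_int i * h)) = traj h" by (rule ext) (simp add: traj_def)
  show "let N = \<lfloor>T / h\<rfloor>; u = (\<lambda>i::int. phi 0 u0 (real_of_int i * h)) in
       \<forall>v eta vinf etainf ep em ez.
         lss_solution phi f Dphi dsphi alpha h u N v eta \<longrightarrow>
         shadowing_direction phi h u vinf etainf \<longrightarrow>
         (\<forall>i\<in>{1..N}. v i - vinf i = ep i + em i + ez i \<and>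
                      ep i \<in> Vp (u i) \<and> em i \<in> Vm (u i) \<and> ez i \<in> V0 f (u i)) \<longrightarrow>
         (\<forall>i\<in>{1..N}. norm (ep i) \<le> ?E * sqrt T \<and> norm (em i) \<le> ?E * sqrt T) \<and>
         \<bar>h / T * (\<Sum>i\<in>{1..N}. DJ (u i) 0 (ep i + em i))\<bar> \<le> ?A / sqrt T"
    unfolding Let_def ue
  proof (intro allI impI conjI ballI)
    fix v eta vinf etainf ep em ez i
    assume sol: "lss_solution phi f Dphi dsphi alpha h (traj h) \<lfloor>T / h\<rfloor> v eta"
      and sd: "shadowing_direction phi h (traj h) vinf etainf"
      and dec: "\<forall>i\<in>{1..\<lfloor>T / h\<rfloor>}. v i - vinf i = ep i + em i + ez i \<and> ep i \<in> Vp (traj h i) \<and> em i \<in> Vm (traj h i) \<and> ez i \<in> V0 f (traj h i)"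
      and i: "i \<in> {1..\<lfloor>T / h\<rfloor>}"
    note mf = main_fixed[OF h T refl sol sd dec i]
    have q1: "(lam powr h) ^ nat (\<lfloor>T / h\<rfloor> - i) \<le> 1" "(lam powr h) ^ nat (i - 1) \<le> 1"
      using q_facts[OF h(1)] by (auto intro: power_le_one)
    have pos: "Cm * Eb * sqrt T \<ge> 0" using Cm_ge Eb_pos T by simp
    have "Cm * Eb * sqrt T * (lam powr h) ^ nat (\<lfloor>T / h\<rfloor> - i) \<le> Cm * Eb * sqrt T" using q1 pos by (simp add: mult_left_le)
    moreover have "Cm * Eb * sqrt T * (lam powr h) ^ nat (i - 1) \<le> Cm * Eb * sqrt T" using q1 pos by (simp add: mult_left_le)
    moreover have "Cm * Eb * sqrt T \<le> ?E * sqrt T" using T by (simp add: mult_right_mono)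
    ultimately show "norm (ep i) \<le> ?E * sqrt T" "norm (em i) \<le> ?E * sqrt T" using mf by linarith+
  next
    fix v eta vinf etainf ep em ez
    assume sol: "lss_solution phi f Dphi dsphi alpha h (traj h) \<lfloor>T / h\<rfloor> v eta"
      and sd: "shadowing_direction phi h (traj h) vinf etainf"
      and dec: "\<forall>i\<in>{1..\<lfloor>T / h\<rfloor>}. v i - vinf i = ep i + em i + ez i \<and> ep i \<in> Vp (traj h i) \<and> em i \<in> Vm (traj h i) \<and> ez i \<in> V0 f (traj h i)"
    have "\<bar>h / T * (\<Sum>i\<in>{1..\<lfloor>T / h\<rfloor>}. DJ (traj h i) 0 (ep i + em i))\<bar> \<le> (4 * Jb * Cm * Eb / ell) / sqrt T"
      by (rule sum_J_bound[OF h T refl sol sd dec])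
    also have "\<dots> \<le> ?A / sqrt T" using T by (intro divide_right_mono) auto
    finally show "\<bar>h / T * (\<Sum>i\<in>{1..\<lfloor>T / h\<rfloor>}. DJ (traj h i) 0 (ep i + em i))\<bar> \<le> ?A / sqrt T" .
  qed
qed

end

theorem mainTheorem7:
  fixes f :: "'a::euclidean_space \<Rightarrow> real \<Rightarrow> 'a"
    and phi :: "real \<Rightarrow> 'a \<Rightarrow> real \<Rightarrow> 'a"
    and Dphi :: "'a \<Rightarrow> real \<Rightarrow> 'a \<Rightarrow>\<^sub>L 'a"
    and dsphi :: "'a \<Rightarrow> real \<Rightarrow> 'a"
    and Lambda :: "'a set" and C lam :: real
    and Vp Vm :: "'a \<Rightarrow> 'a set"
    and J :: "'a \<Rightarrow> real \<Rightarrow> real" and DJ :: "'a \<Rightarrow> real \<Rightarrow> 'a \<Rightarrow>\<^sub>L real"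
    and alpha :: real and u0 :: 'a
  assumes phi_C2: "C2_map (\<lambda>(s, u, t). phi s u t)"
    and phi_init: "\<forall>s u. phi s u 0 = u"
    and phi_ode: "\<forall>s u t. ((\<lambda>t. phi s u t) has_vector_derivative f (phi s u t) s) (at t)"
    and Dphi_def: "\<forall>u t. ((\<lambda>x. phi 0 x t) has_derivative blinfun_apply (Dphi u t)) (at u)"
    and dsphi_def: "\<forall>u t. ((\<lambda>s. phi s u t) has_vector_derivative dsphi u t) (at 0)"
    and Lambda_compact: "compact Lambda"
    and Lambda_inv: "\<forall>u\<in>Lambda. \<forall>t. phi 0 u t \<in> Lambda"
    and C_pos: "C > 0" and lam: "0 < lam" "lam < 1"
    and hyp: "hyperbolic_splitting f phi Dphi Lambda C lam Vp Vm"
    and J_C1: "C1_map (\<lambda>(u, s). J u s)"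
    and DJ_def: "\<forall>u s. ((\<lambda>x. J x s) has_derivative blinfun_apply (DJ u s)) (at u)"
    and alpha_pos: "alpha > 0"
    and u0_in: "u0 \<in> Lambda"
  shows "\<exists>E A' h0 T0. E > 0 \<and> A' > 0 \<and> h0 > 0 \<and> T0 > 0 \<and>
    (\<forall>h T. 0 < h \<longrightarrow> h < h0 \<longrightarrow> T > T0 \<longrightarrow>
      (let N = \<lfloor>T / h\<rfloor>; u = (\<lambda>i::int. phi 0 u0 (real_of_int i * h)) in
       \<forall>v eta vinf etainf ep em ez.
         lss_solution phi f Dphi dsphi alpha h u N v eta \<longrightarrow>
         shadowing_direction phi h u vinf etainf \<longrightarrow>
         (\<forall>i\<in>{1..N}. v i - vinf i = ep i + em i + ez i \<and>
                      ep i \<in> Vp (u i) \<and> em i \<in> Vm (u i) \<and> ez i \<in> V0 f (u i)) \<longrightarrow>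
         (\<forall>i\<in>{1..N}. norm (ep i) \<le> E * sqrt T \<and> norm (em i) \<le> E * sqrt T) \<and>
         \<bar>h / T * (\<Sum>i\<in>{1..N}. DJ (u i) 0 (ep i + em i))\<bar> \<le> A' / sqrt T))"
proof -
  interpret setting f phi Dphi dsphi Lambda C lam Vp Vm J DJ alpha u0
    using assms by (unfold_locales) auto
  show ?thesis by (rule main_loc)
qed

end
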